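(* Let $\mathcal H$ be an infinite-dimensional complex Hilbert space. Define a partial operation $\overline\oplus$ on $\mathcal V_f(\mathcal H)$ by: for $t,s\in\mathcal V_f(\mathcal H)$, $t\,\overline\oplus\, s$ is defined if and only if $t\oplus s$ is defined and $(t+s)_r=t_r+s_r$, and then $t\,\overline\oplus\,s=t\oplus s$. Then $(\mathcal V_f(\mathcal H);\overline\oplus,o)$ is a generalized effect algebra.
   Context: Bilinear forms $t$ on $\mathcal H$ are sesquilinear maps $D(t)\times D(t)\to\mathbb C$ on a dense linear subspace $D(t)$ (linear in the first argument); $t$ is positive if $t(x,x)\ge0$ on $D(t)$, bounded if $\sup\{t(x,x)\mid x\in D(t),\|x\|=1\}<\infty$. The sum $t+s$ has domain $D(t)\cap D(s)$. $o$ is the zero form on $\mathcal H$. $\mathcal V_f(\mathcal H)$ is the set of positive bilinear forms with dense domain such that $D(t)=\mathcal H$ whenever $t$ is bounded; $t\oplus s$ is defined iff $t$ or $s$ is bounded or $D(t)=D(s)$, and then $t\oplus s=t+s$. A positive form is closed if $D(t)$ is a Hilbert space under $(x,y)_t=t(x,y)+(1+m_t)(x,y)$, $m_t=\inf\{t(x,x)\mid x\in D(t),\|x\|=1\}$; closable if it has a closed extension. For a positive form $t$, the regular part $t_r$ is the largest closable positive form with domain $D(t)$ satisfying $t_r(x,x)\le t(x,x)$ for all $x\in D(t)$. A generalized effect algebra is a structure $(E;\oplus,0)$ with a partial operation that is commutative and associative (when one side is defined), has $x\oplus0=x$, is cancellative, and satisfies $x\oplus y=0\Rightarrow x=y=0$.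 *)

theory Defs
  imports Complex_Main
begin

text \<open>A complex Hilbert space structure on a type 'a: complex scalar multiplication sc and
  inner product ip (linear in the first argument), complete w.r.t. the induced norm.\<close>

definition hnorm :: "('a \<Rightarrow> 'a \<Rightarrow> complex) \<Rightarrow> 'a \<Rightarrow> real" where
  "hnorm ip x = sqrt (Re (ip x x))"

definition complex_hilbert_space ::
  "(complex \<Rightarrow> 'a::ab_group_add \<Rightarrow> 'a) \<Rightarrow> ('a \<Rightarrow> 'a \<Rightarrow> complex) \<Rightarrow> bool" where
  "complex_hilbert_space sc ip \<longleftrightarrow>
     (\<forall>a x y. sc a (x + y) = sc a x + sc a y) \<and>
     (\<forall>a b x. sc (a + b) x = sc a x + sc b x) \<and>
     (\<forall>a b x. sc a (sc b x) = sc (a * b) x) \<and>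
     (\<forall>x. sc 1 x = x) \<and>
     (\<forall>x y z. ip (x + y) z = ip x z + ip y z) \<and>
     (\<forall>a x y. ip (sc a x) y = a * ip x y) \<and>
     (\<forall>x y. ip y x = cnj (ip x y)) \<and>
     (\<forall>x. Im (ip x x) = 0 \<and> 0 \<le> Re (ip x x)) \<and>
     (\<forall>x. ip x x = 0 \<longrightarrow> x = 0) \<and>
     (\<forall>X. (\<forall>e>0. \<exists>N. \<forall>m\<ge>N. \<forall>k\<ge>N. hnorm ip (X m - X k) < e)
          \<longrightarrow> (\<exists>L. (\<lambda>k. hnorm ip (X k - L)) \<longlonglongrightarrow> 0))"

definition cspan :: "(complex \<Rightarrow> 'a::ab_group_add \<Rightarrow> 'a) \<Rightarrow> 'a set \<Rightarrow> 'a set" where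
  "cspan sc S = {y. \<exists>c. y = (\<Sum>v\<in>S. sc (c v) v)}"

definition infinite_dimensional :: "(complex \<Rightarrow> 'a::ab_group_add \<Rightarrow> 'a) \<Rightarrow> bool" where
  "infinite_dimensional sc \<longleftrightarrow> (\<forall>S. finite S \<longrightarrow> cspan sc S \<noteq> UNIV)"

text \<open>A form is a pair (domain, values); by convention the value is 0 outside domain x domain,
  so that equality of forms is equality of pairs.\<close>
type_synonym 'a form = "'a set \<times> ('a \<Rightarrow> 'a \<Rightarrow> complex)"

definition fdom :: "'a form \<Rightarrow> 'a set" where "fdom t = fst t"
definition fval :: "'a form \<Rightarrow> 'a \<Rightarrow> 'a \<Rightarrow> complex" where "fval t = snd t"

definition lin_subspace :: "(complex \<Rightarrow> 'a::ab_group_add \<Rightarrow> 'a) \<Rightarrow> 'a set \<Rightarrow> bool" where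
  "lin_subspace sc D \<longleftrightarrow> 0 \<in> D \<and> (\<forall>x\<in>D. \<forall>y\<in>D. x + y \<in> D) \<and> (\<forall>a. \<forall>x\<in>D. sc a x \<in> D)"

definition dense_in :: "('a::ab_group_add \<Rightarrow> 'a \<Rightarrow> complex) \<Rightarrow> 'a set \<Rightarrow> bool" where
  "dense_in ip D \<longleftrightarrow> (\<forall>x. \<forall>e>0. \<exists>y\<in>D. hnorm ip (x - y) < e)"

definition is_form ::
  "(complex \<Rightarrow> 'a::ab_group_add \<Rightarrow> 'a) \<Rightarrow> ('a \<Rightarrow> 'a \<Rightarrow> complex) \<Rightarrow> 'a form \<Rightarrow> bool" where
  "is_form sc ip t \<longleftrightarrow>
     lin_subspace sc (fdom t) \<and> dense_in ip (fdom t) \<and>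
     (\<forall>x\<in>fdom t. \<forall>y\<in>fdom t. \<forall>z\<in>fdom t. fval t (x + y) z = fval t x z + fval t y z) \<and>
     (\<forall>x\<in>fdom t. \<forall>y\<in>fdom t. \<forall>z\<in>fdom t. fval t x (y + z) = fval t x y + fval t x z) \<and>
     (\<forall>a. \<forall>x\<in>fdom t. \<forall>y\<in>fdom t. fval t (sc a x) y = a * fval t x y) \<and>
     (\<forall>a. \<forall>x\<in>fdom t. \<forall>y\<in>fdom t. fval t x (sc a y) = cnj a * fval t x y) \<and>
     (\<forall>x y. \<not> (x \<in> fdom t \<and> y \<in> fdom t) \<longrightarrow> fval t x y = 0)"

definition positive_form :: "'a form \<Rightarrow> bool" where
  "positive_form t \<longleftrightarrow> (\<forall>x\<in>fdom t. Im (fval t x x) = 0 \<and> 0 \<le> Re (fval t x x))"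

definition bounded_form :: "('a \<Rightarrow> 'a \<Rightarrow> complex) \<Rightarrow> 'a form \<Rightarrow> bool" where
  "bounded_form ip t \<longleftrightarrow> bdd_above {Re (fval t x x) | x. x \<in> fdom t \<and> hnorm ip x = 1}"

definition form_add :: "'a form \<Rightarrow> 'a form \<Rightarrow> 'a form" where
  "form_add t s = (fdom t \<inter> fdom s,
     (\<lambda>x y. if x \<in> fdom t \<inter> fdom s \<and> y \<in> fdom t \<inter> fdom s
            then fval t x y + fval s x y else 0))"

definition zero_form :: "'a form" where
  "zero_form = (UNIV, (\<lambda>x y. 0))"

definition Vf ::
  "(complex \<Rightarrow> 'a::ab_group_add \<Rightarrow> 'a) \<Rightarrow> ('a \<Rightarrow> 'a \<Rightarrow> complex) \<Rightarrow> 'a form set" where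
  "Vf sc ip = {t. is_form sc ip t \<and> positive_form t \<and>
                  (bounded_form ip t \<longrightarrow> fdom t = UNIV)}"

definition oplus_defined :: "('a \<Rightarrow> 'a \<Rightarrow> complex) \<Rightarrow> 'a form \<Rightarrow> 'a form \<Rightarrow> bool" where
  "oplus_defined ip t s \<longleftrightarrow> bounded_form ip t \<or> bounded_form ip s \<or> fdom t = fdom s"

definition lower_bound :: "('a \<Rightarrow> 'a \<Rightarrow> complex) \<Rightarrow> 'a form \<Rightarrow> real" where
  "lower_bound ip t = Inf {Re (fval t x x) | x. x \<in> fdom t \<and> hnorm ip x = 1}"

text \<open>norm on D(t) induced by (x,y)_t = t(x,y) + (1+m_t)(x,y)\<close>
definition form_norm :: "('a \<Rightarrow> 'a \<Rightarrow> complex) \<Rightarrow> 'a form \<Rightarrow> 'a \<Rightarrow> real" where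
  "form_norm ip t x = sqrt (Re (fval t x x) + (1 + lower_bound ip t) * (hnorm ip x)^2)"

definition closed_form ::
  "(complex \<Rightarrow> 'a::ab_group_add \<Rightarrow> 'a) \<Rightarrow> ('a \<Rightarrow> 'a \<Rightarrow> complex) \<Rightarrow> 'a form \<Rightarrow> bool" where
  "closed_form sc ip t \<longleftrightarrow> is_form sc ip t \<and> positive_form t \<and>
     (\<forall>X. (\<forall>k. X k \<in> fdom t) \<and>
          (\<forall>e>0. \<exists>N. \<forall>m\<ge>N. \<forall>k\<ge>N. form_norm ip t (X m - X k) < e)
          \<longrightarrow> (\<exists>L\<in>fdom t. (\<lambda>k. form_norm ip t (X k - L)) \<longlonglongrightarrow> 0))"

definition closable_form ::
  "(complex \<Rightarrow> 'a::ab_group_add \<Rightarrow> 'a) \<Rightarrow> ('a \<Rightarrow> 'a \<Rightarrow> complex) \<Rightarrow> 'a form \<Rightarrow> bool" where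
  "closable_form sc ip t \<longleftrightarrow>
     (\<exists>s. closed_form sc ip s \<and> fdom t \<subseteq> fdom s \<and>
          (\<forall>x\<in>fdom t. \<forall>y\<in>fdom t. fval s x y = fval t x y))"

definition reg_candidate ::
  "(complex \<Rightarrow> 'a::ab_group_add \<Rightarrow> 'a) \<Rightarrow> ('a \<Rightarrow> 'a \<Rightarrow> complex) \<Rightarrow> 'a form \<Rightarrow> 'a form \<Rightarrow> bool" where
  "reg_candidate sc ip t r \<longleftrightarrow> is_form sc ip r \<and> positive_form r \<and> closable_form sc ip r \<and>
     fdom r = fdom t \<and> (\<forall>x\<in>fdom t. Re (fval r x x) \<le> Re (fval t x x))"

definition regular_part ::
  "(complex \<Rightarrow> 'a::ab_group_add \<Rightarrow> 'a) \<Rightarrow> ('a \<Rightarrow> 'a \<Rightarrow> complex) \<Rightarrow> 'a form \<Rightarrow> 'a form" where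
  "regular_part sc ip t = (THE r. reg_candidate sc ip t r \<and>
     (\<forall>r'. reg_candidate sc ip t r' \<longrightarrow> (\<forall>x\<in>fdom t. Re (fval r' x x) \<le> Re (fval r x x))))"

definition obar_oplus ::
  "(complex \<Rightarrow> 'a::ab_group_add \<Rightarrow> 'a) \<Rightarrow> ('a \<Rightarrow> 'a \<Rightarrow> complex) \<Rightarrow> 'a form \<Rightarrow> 'a form \<Rightarrow> 'a form option" where
  "obar_oplus sc ip t s =
     (if oplus_defined ip t s \<and>
         regular_part sc ip (form_add t s) = form_add (regular_part sc ip t) (regular_part sc ip s)
      then Some (form_add t s) else None)"

definition gen_effect_algebra :: "'b set \<Rightarrow> ('b \<Rightarrow> 'b \<Rightarrow> 'b option) \<Rightarrow> 'b \<Rightarrow> bool" where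
  "gen_effect_algebra E op z \<longleftrightarrow>
     z \<in> E \<and>
     (\<forall>x\<in>E. \<forall>y\<in>E. \<forall>w. op x y = Some w \<longrightarrow> w \<in> E) \<and>
     (\<forall>x\<in>E. \<forall>y\<in>E. op x y = op y x) \<and>
     (\<forall>x\<in>E. \<forall>y\<in>E. \<forall>u\<in>E. \<forall>xy. op x y = Some xy \<and> op xy u \<noteq> None \<longrightarrow>
        (\<exists>yu. op y u = Some yu \<and> op x yu = op xy u)) \<and>
     (\<forall>x\<in>E. \<forall>y\<in>E. \<forall>u\<in>E. \<forall>yu. op y u = Some yu \<and> op x yu \<noteq> None \<longrightarrow>
        (\<exists>xy. op x y = Some xy \<and> op xy u = op x yu)) \<and>
     (\<forall>x\<in>E. op x z = Some x) \<and>
     (\<forall>x\<in>E. \<forall>y\<in>E. \<forall>u\<in>E. op x y \<noteq> None \<and> op x y = op x u \<longrightarrow> y = u) \<and>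
     (\<forall>x\<in>E. \<forall>y\<in>E. op x y = Some z \<longrightarrow> x = z \<and> y = z)"

end

theory Submission
  imports Defs
begin


locale hs =
  fixes sc :: "complex \<Rightarrow> 'a::ab_group_add \<Rightarrow> 'a" and ip :: "'a \<Rightarrow> 'a \<Rightarrow> complex"
  assumes H: "complex_hilbert_space sc ip"
begin

lemmas Hs = H[unfolded complex_hilbert_space_def]

lemma sc_add: "sc a (x + y) = sc a x + sc a y" using conjunct1[OF Hs] by blast
lemma sc_add2: "sc (a + b) x = sc a x + sc b x" using conjunct1[OF conjunct2[OF Hs]] by blast
lemma sc_sc: "sc a (sc b x) = sc (a * b) x" using conjunct1[OF conjunct2[OF conjunct2[OF Hs]]] by blast
lemma sc_one[simp]: "sc 1 x = x" using conjunct1[OF conjunct2[OF conjunct2[OF conjunct2[OF Hs]]]] by blast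
lemma ip_add: "ip (x + y) z = ip x z + ip y z" using conjunct1[OF conjunct2[OF conjunct2[OF conjunct2[OF conjunct2[OF Hs]]]]] by blast
lemma ip_sc: "ip (sc a x) y = a * ip x y" using conjunct1[OF conjunct2[OF conjunct2[OF conjunct2[OF conjunct2[OF conjunct2[OF Hs]]]]]] by blast
lemma ip_cnj: "ip y x = cnj (ip x y)" using conjunct1[OF conjunct2[OF conjunct2[OF conjunct2[OF conjunct2[OF conjunct2[OF conjunct2[OF Hs]]]]]]] by blast
lemma ip_pos: "Im (ip x x) = 0" "0 \<le> Re (ip x x)" using conjunct1[OF conjunct2[OF conjunct2[OF conjunct2[OF conjunct2[OF conjunct2[OF conjunct2[OF conjunct2[OF Hs]]]]]]]] by blast+
lemma ip_def0: "ip x x = 0 \<Longrightarrow> x = 0" using conjunct1[OF conjunct2[OF conjunct2[OF conjunct2[OF conjunct2[OF conjunct2[OF conjunct2[OF conjunct2[OF conjunct2[OF Hs]]]]]]]]] by blast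
lemma complete: "(\<forall>e>0. \<exists>N. \<forall>m\<ge>N. \<forall>k\<ge>N. hnorm ip (X m - X k) < e)
          \<Longrightarrow> (\<exists>L. (\<lambda>k. hnorm ip (X k - L)) \<longlonglongrightarrow> 0)"
  using conjunct2[OF conjunct2[OF conjunct2[OF conjunct2[OF conjunct2[OF conjunct2[OF conjunct2[OF conjunct2[OF conjunct2[OF Hs]]]]]]]]] by blast

lemma sc_zero[simp]: "sc 0 x = 0"
proof -
  have "sc 0 x + sc 0 x = sc 0 x + 0" using sc_add2[of 0 0 x] by (simp only: add_0_right)
  thus ?thesis by (rule add_left_imp_eq)
qed
lemma sc_zero2[simp]: "sc a 0 = 0"
proof -
  have "sc a 0 + sc a 0 = sc a 0 + 0" using sc_add[of a 0 0] by (simp only: add_0_right)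
  thus ?thesis by (rule add_left_imp_eq)
qed
lemma sc_minus: "sc a (- x) = - sc a x"
proof -
  have "sc a x + sc a (- x) = 0" using sc_add[of a x "-x"] by (metis add.right_inverse sc_zero2)
  thus ?thesis by (metis minus_unique)
qed
lemma sc_diff: "sc a (x - y) = sc a x - sc a y"
  by (simp only: diff_conv_add_uminus sc_add sc_minus)
lemma sc_uminus: "sc (- a) x = - sc a x"
proof -
  have "sc a x + sc (-a) x = 0" using sc_add2[of a "-a" x] by (metis add.right_inverse sc_zero)
  thus ?thesis by (metis minus_unique)
qed
lemma sc_diff2: "sc (a - b) x = sc a x - sc b x"
  by (metis diff_conv_add_uminus sc_add2 sc_uminus)
lemma sc_m1: "sc (-1) x = - x" by (simp only: sc_uminus sc_one)
lemma sc_2: "sc 2 x = x + x" using sc_add2[of 1 1 x] by (simp only: one_add_one sc_one)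

lemma ip_add2: "ip z (x + y) = ip z x + ip z y"
  by (metis complex_cnj_add ip_add ip_cnj)
lemma ip_sc2: "ip x (sc a y) = cnj a * ip x y"
  by (metis complex_cnj_cnj complex_cnj_mult ip_cnj ip_sc)
lemma ip_0[simp]: "ip 0 y = 0" using ip_sc[of 0 0 y] by simp
lemma ip_02[simp]: "ip y 0 = 0" using ip_sc2[of y 0 0] by simp

definition sesq :: "'a set \<Rightarrow> ('a \<Rightarrow> 'a \<Rightarrow> complex) \<Rightarrow> bool" where
  "sesq D f \<longleftrightarrow> lin_subspace sc D \<and>
     (\<forall>x\<in>D. \<forall>y\<in>D. \<forall>z\<in>D. f (x + y) z = f x z + f y z) \<and>
     (\<forall>x\<in>D. \<forall>y\<in>D. \<forall>z\<in>D. f x (y + z) = f x y + f x z) \<and>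
     (\<forall>a. \<forall>x\<in>D. \<forall>y\<in>D. f (sc a x) y = a * f x y) \<and>
     (\<forall>a. \<forall>x\<in>D. \<forall>y\<in>D. f x (sc a y) = cnj a * f x y)"

lemma ls_0: "lin_subspace sc D \<Longrightarrow> 0 \<in> D" unfolding lin_subspace_def by blast
lemma ls_add: "lin_subspace sc D \<Longrightarrow> x \<in> D \<Longrightarrow> y \<in> D \<Longrightarrow> x + y \<in> D"
  unfolding lin_subspace_def by blast
lemma ls_sc: "lin_subspace sc D \<Longrightarrow> x \<in> D \<Longrightarrow> sc a x \<in> D"
  unfolding lin_subspace_def by blast
lemma ls_uminus: "lin_subspace sc D \<Longrightarrow> x \<in> D \<Longrightarrow> - x \<in> D"
  by (metis ls_sc sc_m1)
lemma ls_diff: "lin_subspace sc D \<Longrightarrow> x \<in> D \<Longrightarrow> y \<in> D \<Longrightarrow> x - y \<in> D"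
  by (metis diff_conv_add_uminus ls_add ls_uminus)
lemma ls_UNIV: "lin_subspace sc UNIV" unfolding lin_subspace_def by simp

context
  fixes D f assumes S: "sesq D f"
begin
lemma S_ls: "lin_subspace sc D" using S unfolding sesq_def by blast
lemma S_add1: "x \<in> D \<Longrightarrow> y \<in> D \<Longrightarrow> z \<in> D \<Longrightarrow> f (x + y) z = f x z + f y z"
  using S unfolding sesq_def by blast
lemma S_add2: "x \<in> D \<Longrightarrow> y \<in> D \<Longrightarrow> z \<in> D \<Longrightarrow> f x (y + z) = f x y + f x z"
  using S unfolding sesq_def by blast
lemma S_sc1: "x \<in> D \<Longrightarrow> y \<in> D \<Longrightarrow> f (sc a x) y = a * f x y"
  using S unfolding sesq_def by blast
lemma S_sc2: "x \<in> D \<Longrightarrow> y \<in> D \<Longrightarrow> f x (sc a y) = cnj a * f x y"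
  using S unfolding sesq_def by blast
lemma S_01: "y \<in> D \<Longrightarrow> f 0 y = 0"
  using S_sc1[of 0 y 0] S_ls ls_0 by simp
lemma S_02: "y \<in> D \<Longrightarrow> f y 0 = 0"
  using S_sc2[of y 0 0] S_ls ls_0 by simp
lemma S_uminus1: "x \<in> D \<Longrightarrow> y \<in> D \<Longrightarrow> f (- x) y = - f x y"
  using S_sc1[of x y "-1"] by (simp add: sc_m1)
lemma S_uminus2: "x \<in> D \<Longrightarrow> y \<in> D \<Longrightarrow> f x (- y) = - f x y"
  using S_sc2[of x y "-1"] by (simp add: sc_m1)
lemma S_diff1: "x \<in> D \<Longrightarrow> y \<in> D \<Longrightarrow> z \<in> D \<Longrightarrow> f (x - y) z = f x z - f y z"
proof -
  assume a: "x \<in> D" "y \<in> D" "z \<in> D"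
  have "- y \<in> D" using a S_ls ls_uminus by blast
  hence "f (x + - y) z = f x z + f (- y) z" using a S_add1 by blast
  thus ?thesis using S_uminus1[of y z] a by simp
qed
lemma S_diff2: "x \<in> D \<Longrightarrow> y \<in> D \<Longrightarrow> z \<in> D \<Longrightarrow> f z (x - y) = f z x - f z y"
proof -
  assume a: "x \<in> D" "y \<in> D" "z \<in> D"
  have "- y \<in> D" using a S_ls ls_uminus by blast
  hence "f z (x + - y) = f z x + f z (- y)" using a S_add2 by blast
  thus ?thesis using S_uminus2[of z y] a by simp
qed
lemma S_expand: "x \<in> D \<Longrightarrow> y \<in> D \<Longrightarrow> f (x + y) (x + y) = f x x + f x y + f y x + f y y"
  using S_add1 S_add2 S_ls ls_add by simp
lemma S_expand_diff: "x \<in> D \<Longrightarrow> y \<in> D \<Longrightarrow> f (x - y) (x - y) = f x x - f x y - f y x + f y y"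
  using S_diff1 S_diff2 S_ls ls_diff by simp
lemma S_para: "x \<in> D \<Longrightarrow> y \<in> D \<Longrightarrow>
   f (x + y) (x + y) + f (x - y) (x - y) = 2 * f x x + 2 * f y y"
  using S_expand S_expand_diff by simp
lemma S_scsc: "x \<in> D \<Longrightarrow> f (sc a x) (sc a x) = of_real ((cmod a)^2) * f x x"
proof -
  assume x: "x \<in> D"
  have "f (sc a x) (sc a x) = a * (cnj a * f x x)" using S_sc1 S_sc2 x S_ls ls_sc by simp
  also have "\<dots> = (a * cnj a) * f x x" by simp
  also have "a * cnj a = of_real ((cmod a)^2)" by (rule complex_norm_square[symmetric])
  finally show ?thesis .
qed
lemma S_uu: "x \<in> D \<Longrightarrow> f (- x) (- x) = f x x"
  using S_uminus1 S_uminus2 S_ls ls_uminus by simp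
lemma S_commdiff: "x \<in> D \<Longrightarrow> y \<in> D \<Longrightarrow> f (x - y) (x - y) = f (y - x) (y - x)"
  by (metis S_uu minus_diff_eq S_ls ls_diff)
end

lemma quad_bound:
  fixes A B c :: real
  assumes A: "0 \<le> A" and B: "0 \<le> B" and q: "\<And>r. 0 \<le> A + r * c + r^2 * B"
  shows "c \<le> 2 * sqrt (A * B)"
proof (cases "B = 0")
  case True
  have "c = 0"
  proof (rule ccontr)
    assume "c \<noteq> 0"
    have "0 \<le> A + (- (A + 1) / c) * c + (- (A + 1) / c)^2 * B" by (rule q)
    with True \<open>c \<noteq> 0\<close> show False by simp
  qed
  thus ?thesis using A B by simp
next
  case False
  hence Bp: "B > 0" using B by simp
  have "0 \<le> A + (- c / (2*B)) * c + (- c / (2*B))^2 * B" by (rule q)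
  hence "0 \<le> A - c^2 / (4 * B)" using Bp by (simp add: field_simps power2_eq_square)
  hence "c^2 \<le> 4 * A * B" using Bp by (simp add: field_simps)
  hence "c^2 \<le> (2 * sqrt (A * B))^2" using A B by (simp add: power_mult_distrib)
  thus ?thesis using A B by (meson real_le_rsqrt real_sqrt_le_iff power2_le_imp_le
     mult_nonneg_nonneg real_sqrt_ge_zero zero_le_numeral abs_le_square_iff abs_ge_self order_trans real_sqrt_abs)
qed

definition qf :: "('a \<Rightarrow> 'a \<Rightarrow> complex) \<Rightarrow> 'a \<Rightarrow> real" where "qf f x = Re (f x x)"

context
  fixes D f assumes S: "sesq D f" and P: "\<forall>x\<in>D. 0 \<le> Re (f x x)"
begin
lemma q_nonneg: "x \<in> D \<Longrightarrow> 0 \<le> qf f x" using P unfolding qf_def by blast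
lemma q_sc: "x \<in> D \<Longrightarrow> qf f (sc a x) = (cmod a)^2 * qf f x"
  unfolding qf_def using S_scsc[OF S] by simp
lemma q_para: "x \<in> D \<Longrightarrow> y \<in> D \<Longrightarrow> qf f (x + y) + qf f (x - y) = 2 * qf f x + 2 * qf f y"
proof -
  assume a: "x \<in> D" "y \<in> D"
  have "Re (f (x + y) (x + y) + f (x - y) (x - y)) = Re (2 * f x x + 2 * f y y)"
    using S_para[OF S a] by simp
  thus ?thesis unfolding qf_def by simp
qed
lemma q_uminus: "x \<in> D \<Longrightarrow> qf f (- x) = qf f x" unfolding qf_def using S_uu[OF S] by simp
lemma q_commdiff: "x \<in> D \<Longrightarrow> y \<in> D \<Longrightarrow> qf f (x - y) = qf f (y - x)"
  unfolding qf_def using S_commdiff[OF S] by simp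
lemma q_tri: assumes x: "x \<in> D" and y: "y \<in> D"
  shows "sqrt (qf f (x + y)) \<le> sqrt (qf f x) + sqrt (qf f y)"
proof -
  let ?c = "Re (f x y + f y x)"
  have D: "lin_subspace sc D" using S_ls[OF S] .
  have e: "qf f (x + sc (of_real r) y) = qf f x + r * ?c + r^2 * qf f y" for r
  proof -
    have sy: "sc (of_real r) y \<in> D" using D y ls_sc by blast
    have "(complex_of_real \<bar>r\<bar>)^2 = (complex_of_real r)^2" by (metis of_real_power power2_abs)
    have "f (x + sc (of_real r) y) (x + sc (of_real r) y) =
       f x x + f x (sc (of_real r) y) + f (sc (of_real r) y) x + f (sc (of_real r) y) (sc (of_real r) y)"
      using S_expand[OF S x sy] .
    also have "\<dots> = f x x + of_real r * f x y + of_real r * f y x + of_real ((cmod (of_real r))^2) * f y y"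
      using S_sc1[OF S y x] S_sc2[OF S x y] S_scsc[OF S y]
        \<open>(complex_of_real \<bar>r\<bar>)^2 = (complex_of_real r)^2\<close> by simp
    also have "(cmod (of_real r))^2 = r^2" by simp
    finally show ?thesis unfolding qf_def by (simp add: power2_eq_square algebra_simps)
  qed
  have c: "?c \<le> 2 * sqrt (qf f x * qf f y)"
  proof (rule quad_bound)
    show "0 \<le> qf f x" "0 \<le> qf f y" using q_nonneg x y by auto
    fix r :: real
    have "0 \<le> qf f (x + sc (of_real r) y)" using q_nonneg D x y ls_sc ls_add by blast
    thus "0 \<le> qf f x + r * ?c + r^2 * qf f y" using e by simp
  qed
  have "qf f (x + y) = qf f x + ?c + qf f y"
    using S_expand[OF S x y] unfolding qf_def by simp
  also have "\<dots> \<le> (sqrt (qf f x) + sqrt (qf f y))^2"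
    using c q_nonneg[OF x] q_nonneg[OF y] by (simp add: power2_eq_square real_sqrt_mult algebra_simps)
  finally show ?thesis
    using q_nonneg[OF x] q_nonneg[OF y] by (intro real_le_lsqrt) auto
qed
lemma q_tri_diff: assumes x: "x \<in> D" and y: "y \<in> D"
  shows "\<bar>sqrt (qf f x) - sqrt (qf f y)\<bar> \<le> sqrt (qf f (x - y))"
proof -
  have D: "lin_subspace sc D" using S_ls[OF S] .
  have "sqrt (qf f x) \<le> sqrt (qf f (x - y)) + sqrt (qf f y)"
    using q_tri[of "x - y" y] D ls_diff x y by simp
  moreover have "sqrt (qf f y) \<le> sqrt (qf f (x - y)) + sqrt (qf f x)"
    using q_tri[of "y - x" x] D ls_diff x y q_commdiff by simp
  ultimately show ?thesis by (simp add: abs_le_iff)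
qed
lemma q_tri3: assumes x: "x \<in> D" and y: "y \<in> D"
  shows "sqrt (qf f (x - y)) \<le> sqrt (qf f x) + sqrt (qf f y)"
  using q_tri[of x "-y"] q_uminus[of y] S_ls[OF S] ls_uminus x y by simp
end

end


context hs begin

context
  fixes D and g :: "'a \<Rightarrow> real"
  assumes ls: "lin_subspace sc D"
    and nn: "\<And>x. x \<in> D \<Longrightarrow> 0 \<le> g x"
    and para: "\<And>x y. x \<in> D \<Longrightarrow> y \<in> D \<Longrightarrow> g (x + y) + g (x - y) = 2 * g x + 2 * g y"
    and hom: "\<And>a x. x \<in> D \<Longrightarrow> g (sc a x) = (cmod a)^2 * g x"
begin

definition R :: "'a \<Rightarrow> 'a \<Rightarrow> real" where "R x y = (g (x + y) - g (x - y)) / 4"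

lemma g0: "g 0 = 0" using hom[of 0 0] ls_0[OF ls] by simp
lemma g_uminus: "x \<in> D \<Longrightarrow> g (- x) = g x" using hom[of x "-1"] by (simp add: sc_m1)
lemma R_sym: "x \<in> D \<Longrightarrow> y \<in> D \<Longrightarrow> R x y = R y x"
  unfolding R_def using g_uminus[of "x - y"] ls_diff[OF ls] by (simp add: add.commute)
lemma R_0: "y \<in> D \<Longrightarrow> R 0 y = 0" unfolding R_def using g_uminus by simp
lemma R_xx: "x \<in> D \<Longrightarrow> R x x = g x"
  unfolding R_def using hom[of x 2] g0 by (simp add: sc_2)
lemma R_mid: assumes x: "x \<in> D" and x': "x' \<in> D" and y: "y \<in> D"
  shows "R (x + x') y + R (x - x') y = 2 * R x y"
proof -
  have 1: "g ((x + y) + x') + g ((x + y) - x') = 2 * g (x + y) + 2 * g x'"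
    using para ls_add[OF ls] x x' y by blast
  have 2: "g ((x - y) + x') + g ((x - y) - x') = 2 * g (x - y) + 2 * g x'"
    using para ls_diff[OF ls] x x' y by blast
  have e1: "(x + y) + x' = x + x' + y" "(x + y) - x' = x - x' + y"
    "(x - y) + x' = x + x' - y" "(x - y) - x' = x - x' - y" by (simp_all add: algebra_simps)
  have "R (x + x') y + R (x - x') y
     = ((g (x + x' + y) + g (x - x' + y)) - (g (x + x' - y) + g (x - x' - y))) / 4"
    unfolding R_def by (simp add: field_simps)
  also have "\<dots> = (2 * g (x + y) - 2 * g (x - y)) / 4" using 1 2 unfolding e1 by simp
  also have "\<dots> = 2 * R x y" unfolding R_def by simp
  finally show ?thesis .
qed
lemma R_double: "x \<in> D \<Longrightarrow> y \<in> D \<Longrightarrow> R (x + x) y = 2 * R x y"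
  using R_mid[of x x y] R_0 by simp
lemma half_sum: "sc (1/2) (u + v) + sc (1/2) (u - v) = u"
proof -
  have "sc (1/2) (u + v) + sc (1/2) (u - v) = sc (1/2) ((u + v) + (u - v))" by (rule sc_add[symmetric])
  also have "(u + v) + (u - v) = sc 2 u" by (simp add: sc_2)
  also have "sc (1/2) (sc 2 u) = u" by (simp add: sc_sc)
  finally show ?thesis .
qed
lemma half_diff: "sc (1/2) (u + v) - sc (1/2) (u - v) = v"
proof -
  have "sc (1/2) (u + v) - sc (1/2) (u - v) = sc (1/2) ((u + v) - (u - v))" by (rule sc_diff[symmetric])
  also have "(u + v) - (u - v) = sc 2 v" by (simp add: sc_2)
  also have "sc (1/2) (sc 2 v) = v" by (simp add: sc_sc)
  finally show ?thesis .
qed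
lemma half_double: "sc (1/2) w + sc (1/2) w = w"
proof -
  have "sc (1/2 + 1/2) w = w" by simp
  thus ?thesis by (metis sc_add2)
qed
lemma R_add: assumes u: "u \<in> D" and v: "v \<in> D" and y: "y \<in> D"
  shows "R (u + v) y = R u y + R v y"
proof -
  let ?x = "sc (1/2) (u + v)" and ?x' = "sc (1/2) (u - v)"
  have "?x \<in> D" "?x' \<in> D" using u v ls_sc[OF ls] ls_add[OF ls] ls_diff[OF ls] by blast+
  hence "R (?x + ?x') y + R (?x - ?x') y = 2 * R ?x y" using R_mid y by blast
  also have "2 * R ?x y = R (?x + ?x) y" using R_double \<open>?x \<in> D\<close> y by simp
  finally show ?thesis unfolding half_sum half_diff half_double by simp
qed
lemma R_uminus: "x \<in> D \<Longrightarrow> y \<in> D \<Longrightarrow> R (- x) y = - R x y"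
  using R_add[of x "-x" y] R_0 ls_uminus[OF ls] by simp
lemma R_nat: "x \<in> D \<Longrightarrow> y \<in> D \<Longrightarrow> R (sc (of_nat n) x) y = of_nat n * R x y"
proof (induction n)
  case 0 then show ?case using R_0 by simp
next
  case (Suc n)
  have "sc (of_nat (Suc n)) x = sc (of_nat n) x + x" by (metis sc_add2 sc_one of_nat_Suc add.commute)
  moreover have "sc (of_nat n) x \<in> D" using ls_sc[OF ls] Suc by blast
  ultimately show ?case using R_add Suc by (simp add: algebra_simps)
qed
lemma R_int: "x \<in> D \<Longrightarrow> y \<in> D \<Longrightarrow> R (sc (of_int k) x) y = of_int k * R x y"
proof (cases "k \<ge> 0")
  case True
  then obtain n where "k = int n" by (metis nonneg_int_cases)
  thus "x \<in> D \<Longrightarrow> y \<in> D \<Longrightarrow> ?thesis" using R_nat by simp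
next
  case False
  define n where "n = nat (- k)"
  have n: "k = - int n" using False unfolding n_def by simp
  assume x: "x \<in> D" and y: "y \<in> D"
  have "sc (of_int k) x = - sc (of_nat n) x" using n by (simp add: sc_uminus)
  moreover have "sc (of_nat n) x \<in> D" using ls_sc[OF ls] x by blast
  ultimately show ?thesis using R_uminus R_nat x y n by simp
qed
lemma R_invnat: assumes "x \<in> D" "y \<in> D" "n > 0"
  shows "R (sc (1 / of_nat n) x) y = R x y / of_nat n"
proof -
  have "sc (1 / of_nat n) x \<in> D" using ls_sc[OF ls] assms by blast
  hence "R (sc (of_nat n) (sc (1 / of_nat n) x)) y = of_nat n * R (sc (1 / of_nat n) x) y"
    using R_nat assms by blast
  moreover have "sc (of_nat n) (sc (1 / of_nat n) x) = x" using assms by (simp add: sc_sc)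
  ultimately show ?thesis using assms by (simp add: field_simps)
qed
lemma R_frac: assumes "x \<in> D" "y \<in> D" "n > 0"
  shows "R (sc (of_int k / of_nat n) x) y = (of_int k / of_nat n) * R x y"
proof -
  have "sc (of_int k / of_nat n) x = sc (of_int k) (sc (1 / of_nat n) x)" by (simp add: sc_sc)
  moreover have "sc (1 / of_nat n) x \<in> D" using ls_sc[OF ls] assms by blast
  ultimately show ?thesis using R_int R_invnat assms by simp
qed
lemma R_bound: "x \<in> D \<Longrightarrow> y \<in> D \<Longrightarrow> \<bar>R x y\<bar> \<le> (g x + g y) / 2"
  unfolding R_def using para[of x y] nn[of "x + y"] nn[of "x - y"] ls_add[OF ls] ls_diff[OF ls]
  by (simp add: abs_le_iff)
lemma R_scaled_bound: assumes w: "w \<in> D" and y: "y \<in> D" and n: "n > 0"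
  shows "\<bar>R w y\<bar> \<le> ((of_nat n)^2 * g w + g y / (of_nat n)^2) / 2"
proof -
  have z: "sc (1 / of_nat n) y \<in> D" using ls_sc[OF ls] y by blast
  have nw: "sc (of_nat n) w \<in> D" using ls_sc[OF ls] w by blast
  have "R (sc (of_nat n) w) (sc (1 / of_nat n) y) = of_nat n * R w (sc (1 / of_nat n) y)"
    using R_nat[OF w z] .
  also have "R w (sc (1 / of_nat n) y) = R y w / of_nat n"
    using R_sym[OF w z] R_invnat[OF y w n] by simp
  also have "R y w = R w y" using R_sym w y by simp
  finally have e: "R (sc (of_nat n) w) (sc (1 / of_nat n) y) = R w y" using n by simp
  have "\<bar>R (sc (of_nat n) w) (sc (1 / of_nat n) y)\<bar> \<le> (g (sc (of_nat n) w) + g (sc (1 / of_nat n) y)) / 2"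
    using R_bound[OF nw z] .
  also have "g (sc (of_nat n) w) = (of_nat n)^2 * g w" using hom[OF w] by simp
  also have "g (sc (1 / of_nat n) y) = g y / (of_nat n)^2" using hom[OF y]
    by (simp add: norm_divide power_divide)
  finally show ?thesis using e by simp
qed

lemma R_real: assumes x: "x \<in> D" and y: "y \<in> D"
  shows "R (sc (of_real r) x) y = r * R x y"
proof -
  let ?c = "R (sc (of_real r) x) y - r * R x y"
  have "\<bar>?c\<bar> \<le> 2 * e" if e: "e > 0" for e
  proof -
    obtain n :: nat where n: "n > 0" "g y / (of_nat n)^2 < e"
    proof -
      obtain n :: nat where nn': "of_nat n > g y / e" using reals_Archimedean2 by blast
      hence "n > 0" using nn[OF y] e by (metis divide_nonneg_pos of_nat_0_less_iff order_le_less_trans)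
      moreover have "g y / (of_nat n)^2 \<le> g y / of_nat n"
        using \<open>n > 0\<close> nn[OF y] by (intro divide_left_mono) (auto simp: power2_eq_square)
      moreover have "g y / of_nat n < e" using nn' e \<open>n > 0\<close> by (simp add: field_simps)
      ultimately show ?thesis using that by force
    qed
    obtain m :: nat where m: "m > 0" "(of_nat n)^2 * g x / (of_nat m)^2 \<le> e" "\<bar>R x y\<bar> / of_nat m \<le> e"
    proof -
      obtain m :: nat where mm: "of_nat m > ((of_nat n)^2 * g x + \<bar>R x y\<bar>) / e + 1"
        using reals_Archimedean2 by blast
      have A: "0 \<le> (of_nat n)^2 * g x" using nn[OF x] by simp
      have m1: "(1::real) \<le> of_nat m" using mm A e
        by (smt (verit, best) divide_nonneg_pos abs_ge_zero)
      hence "m > 0" by simp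
      have mle: "((of_nat n)^2 * g x + \<bar>R x y\<bar>) \<le> e * of_nat m" using mm e by (simp add: field_simps)
      have "(of_nat n)^2 * g x / (of_nat m)^2 \<le> (of_nat n)^2 * g x / of_nat m"
        using A m1 by (intro divide_left_mono) (auto simp: power2_eq_square)
      also have "\<dots> \<le> e" using mle m1 A by (simp add: field_simps)
      finally have 1: "(of_nat n)^2 * g x / (of_nat m)^2 \<le> e" .
      have 2: "\<bar>R x y\<bar> / of_nat m \<le> e" using mle m1 A by (simp add: field_simps)
      show ?thesis using that \<open>m > 0\<close> 1 2 by blast
    qed
    define k where "k = \<lfloor>r * of_nat m\<rfloor>"
    define q where "q = real_of_int k / of_nat m"
    have fl: "real_of_int k \<le> r * of_nat m" "r * of_nat m \<le> real_of_int k + 1"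
      unfolding k_def by linarith+
    have mp: "(0::real) < of_nat m" using m(1) by simp
    have kq1: "q \<le> r" using fl mp unfolding q_def by (simp add: field_simps)
    have "r - q = (r * of_nat m - real_of_int k) / of_nat m" using mp unfolding q_def by (simp add: field_simps)
    also have "\<dots> \<le> 1 / of_nat m" using fl mp by (intro divide_right_mono) auto
    finally have kq: "q \<le> r" "r - q \<le> 1 / of_nat m" using kq1 by auto
    hence rq: "\<bar>r - q\<bar> \<le> 1 / of_nat m" by simp
    let ?w = "sc (of_real (r - q)) x"
    have w: "?w \<in> D" using ls_sc[OF ls] x by blast
    have sq: "sc (of_real q) x \<in> D" using ls_sc[OF ls] x by blast
    have "sc (of_real r) x = sc (of_real q) x + ?w"
      by (metis sc_add2 add_diff_cancel_left' of_real_add add.commute diff_add_cancel)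
    hence "R (sc (of_real r) x) y = R (sc (of_real q) x) y + R ?w y" using R_add[OF sq w y] by simp
    also have "R (sc (of_real q) x) y = q * R x y"
    proof -
      have "complex_of_real q = of_int k / of_nat m" unfolding q_def by simp
      thus ?thesis using R_frac[OF x y m(1), of k] unfolding q_def by simp
    qed
    finally have ce: "?c = (q - r) * R x y + R ?w y" by (simp add: algebra_simps)
    have "\<bar>(q - r) * R x y\<bar> = \<bar>r - q\<bar> * \<bar>R x y\<bar>" by (simp add: abs_mult abs_minus_commute)
    also have "\<dots> \<le> (1 / of_nat m) * \<bar>R x y\<bar>" by (rule mult_right_mono[OF rq abs_ge_zero])
    finally have 1: "\<bar>(q - r) * R x y\<bar> \<le> e" using m(3) by simp
    have b: "\<bar>R ?w y\<bar> \<le> ((of_nat n)^2 * g ?w + g y / (of_nat n)^2) / 2"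
      using R_scaled_bound[OF w y n(1)] .
    have "(cmod (complex_of_real (r - q)))^2 = (r - q)^2" by (simp only: norm_of_real power2_abs)
    hence gw: "g ?w = (r - q)^2 * g x" using hom[OF x, of "complex_of_real (r - q)"] by simp
    have "(r - q)^2 \<le> (1 / of_nat m)^2"
      using kq by (intro power_mono) auto
    hence "(of_nat n)^2 * g x * (r - q)^2 \<le> (of_nat n)^2 * g x * (1 / of_nat m)^2"
      using nn[OF x] by (intro mult_left_mono) auto
    hence "(of_nat n)^2 * g ?w \<le> (of_nat n)^2 * g x / (of_nat m)^2"
      unfolding gw by (simp add: power_divide algebra_simps)
    hence "(of_nat n)^2 * g ?w \<le> e" using m(2) by linarith
    hence "((of_nat n)^2 * g ?w + g y / (of_nat n)^2) / 2 \<le> (e + e) / 2"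
      using n(2) by (intro divide_right_mono add_mono) auto
    hence 2: "\<bar>R ?w y\<bar> \<le> e" using b by simp
    show ?thesis using ce 1 2 by linarith
  qed
  hence "?c = 0"
  proof -
    assume h: "\<And>e. e > 0 \<Longrightarrow> \<bar>?c\<bar> \<le> 2 * e"
    show "?c = 0"
    proof (rule ccontr)
      assume "?c \<noteq> 0"
      hence "\<bar>?c\<bar> > 0" by simp
      hence "\<bar>?c\<bar> \<le> 2 * (\<bar>?c\<bar> / 4)" using h[of "\<bar>?c\<bar> / 4"] by simp
      with \<open>\<bar>?c\<bar> > 0\<close> show False by (auto simp: field_simps)
    qed
  qed
  thus ?thesis by simp
qed

lemma R_add2: "x \<in> D \<Longrightarrow> y \<in> D \<Longrightarrow> z \<in> D \<Longrightarrow> R x (y + z) = R x y + R x z"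
  using R_sym R_add ls_add[OF ls] by metis
lemma R_real2: "x \<in> D \<Longrightarrow> y \<in> D \<Longrightarrow> R x (sc (of_real r) y) = r * R x y"
  using R_sym R_real ls_sc[OF ls] by metis
lemma R_ii: assumes x: "x \<in> D" and y: "y \<in> D" shows "R (sc \<i> x) (sc \<i> y) = R x y"
proof -
  have "sc \<i> x + sc \<i> y = sc \<i> (x + y)" "sc \<i> x - sc \<i> y = sc \<i> (x - y)"
    by (simp_all add: sc_add sc_diff)
  thus ?thesis unfolding R_def using hom ls_add[OF ls] ls_diff[OF ls] x y by simp
qed
lemma sc_ii: "sc \<i> (sc \<i> x) = - x" by (simp add: sc_sc sc_m1)
lemma R_i1: assumes x: "x \<in> D" and y: "y \<in> D" shows "R (sc \<i> x) y = - R x (sc \<i> y)"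
proof -
  have ix: "sc \<i> x \<in> D" and iy: "sc \<i> y \<in> D" using ls_sc[OF ls] x y by blast+
  have "R (sc \<i> x) y = R (sc \<i> (sc \<i> x)) (sc \<i> y)" using R_ii[OF ix y] by simp
  also have "\<dots> = R (- x) (sc \<i> y)" by (simp add: sc_ii)
  also have "\<dots> = - R x (sc \<i> y)" using R_uminus x iy by blast
  finally show ?thesis .
qed
lemma sc_decomp: "sc a x = sc (of_real (Re a)) x + sc (of_real (Im a)) (sc \<i> x)"
proof -
  have "a = of_real (Re a) + of_real (Im a) * \<i>" by (simp add: complex_eq_iff)
  hence "sc a x = sc (of_real (Re a) + of_real (Im a) * \<i>) x" by simp
  also have "\<dots> = sc (of_real (Re a)) x + sc (of_real (Im a)) (sc \<i> x)" by (simp add: sc_add2 sc_sc)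
  finally show ?thesis .
qed

definition Bf :: "'a \<Rightarrow> 'a \<Rightarrow> complex" where "Bf x y = Complex (R x y) (R x (sc \<i> y))"

lemma Bf_add1: "x \<in> D \<Longrightarrow> y \<in> D \<Longrightarrow> z \<in> D \<Longrightarrow> Bf (x + y) z = Bf x z + Bf y z"
  unfolding Bf_def using R_add ls_sc[OF ls] by (simp add: complex_eq_iff)
lemma Bf_add2: "x \<in> D \<Longrightarrow> y \<in> D \<Longrightarrow> z \<in> D \<Longrightarrow> Bf x (y + z) = Bf x y + Bf x z"
  unfolding Bf_def using R_add2 ls_sc[OF ls] by (simp add: complex_eq_iff sc_add)
lemma Bf_cnj: assumes x: "x \<in> D" and y: "y \<in> D" shows "Bf y x = cnj (Bf x y)"
proof -
  have "R y (sc \<i> x) = - R x (sc \<i> y)" using R_sym R_i1 x y ls_sc[OF ls] by metis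
  thus ?thesis unfolding Bf_def using R_sym x y by (simp add: complex_eq_iff)
qed
lemma Bf_sc1: assumes x: "x \<in> D" and y: "y \<in> D" shows "Bf (sc a x) y = a * Bf x y"
proof -
  have ix: "sc \<i> x \<in> D" and iy: "sc \<i> y \<in> D" using ls_sc[OF ls] x y by blast+
  have p: "sc (of_real (Re a)) x \<in> D" "sc (of_real (Im a)) (sc \<i> x) \<in> D" using ls_sc[OF ls] x ix by blast+
  have 1: "R (sc a x) y = Re a * R x y - Im a * R x (sc \<i> y)"
    using R_add[OF p y] R_real[OF x y] R_real[OF ix y] R_i1[OF x y] sc_decomp[of a x] by simp
  have 2: "R (sc a x) (sc \<i> y) = Re a * R x (sc \<i> y) + Im a * R x y"
    using R_add[OF p iy] R_real[OF x iy] R_real[OF ix iy] R_ii[OF x y] sc_decomp[of a x] by simp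
  show ?thesis unfolding Bf_def using 1 2 by (simp add: complex_eq_iff)
qed
lemma Bf_sc2: assumes x: "x \<in> D" and y: "y \<in> D" shows "Bf x (sc a y) = cnj a * Bf x y"
proof -
  have ay: "sc a y \<in> D" using ls_sc[OF ls] y by blast
  have "Bf x (sc a y) = cnj (Bf (sc a y) x)" using Bf_cnj[OF ay x] by simp
  also have "\<dots> = cnj a * cnj (Bf y x)" using Bf_sc1[OF y x] by simp
  also have "cnj (Bf y x) = Bf x y" using Bf_cnj[OF x y] by simp
  finally show ?thesis .
qed
lemma Bf_xx: assumes x: "x \<in> D" shows "Bf x x = of_real (g x)"
proof -
  have ix: "sc \<i> x \<in> D" using ls_sc[OF ls] x by blast
  have "sc (- \<i>) (x + sc \<i> x) = x - sc \<i> x"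
    by (simp add: sc_add sc_sc sc_uminus sc_one)
  hence "g (x - sc \<i> x) = g (x + sc \<i> x)" using hom[of "x + sc \<i> x" "- \<i>"] ls_add[OF ls] x ix by simp
  hence "R x (sc \<i> x) = 0" unfolding R_def by simp
  thus ?thesis unfolding Bf_def using R_xx[OF x] by (simp add: complex_eq_iff)
qed
lemma Bf_sesq: "sesq D Bf"
  unfolding sesq_def using ls Bf_add1 Bf_add2 Bf_sc1 Bf_sc2 by blast
end

lemma polar: assumes S: "sesq D f" and x: "x \<in> D" and y: "y \<in> D"
  shows "4 * f x y = f (x + y) (x + y) - f (x - y) (x - y)
     + \<i> * f (x + sc \<i> y) (x + sc \<i> y) - \<i> * f (x - sc \<i> y) (x - sc \<i> y)"
proof -
  have iy: "sc \<i> y \<in> D" using ls_sc[OF S_ls[OF S]] y by blast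
  have a: "f x (sc \<i> y) = - \<i> * f x y" "f (sc \<i> y) x = \<i> * f y x"
    "f (sc \<i> y) (sc \<i> y) = f y y"
    using S_sc1[OF S y x] S_sc2[OF S x y] S_scsc[OF S y, of \<i>] by simp_all
  show ?thesis unfolding S_expand[OF S x y] S_expand_diff[OF S x y] S_expand[OF S x iy] S_expand_diff[OF S x iy] a
    by (simp add: algebra_simps)
qed

lemma sesq_diag_eq: assumes S1: "sesq D f1" and S2: "sesq D f2"
  and d: "\<And>x. x \<in> D \<Longrightarrow> f1 x x = f2 x x" and x: "x \<in> D" and y: "y \<in> D"
  shows "f1 x y = f2 x y"
proof -
  have iy: "sc \<i> y \<in> D" using ls_sc[OF S_ls[OF S1]] y by blast
  have D: "lin_subspace sc D" using S_ls[OF S1] .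
  have "4 * f1 x y = 4 * f2 x y"
    unfolding polar[OF S1 x y] polar[OF S2 x y]
    using d ls_add[OF D] ls_diff[OF D] x y iy by simp
  thus ?thesis by simp
qed

end


context hs begin

lemma ip_sesq: "sesq UNIV ip"
  unfolding sesq_def using ls_UNIV ip_add ip_add2 ip_sc ip_sc2 by blast
lemma ip_psd: "\<forall>x\<in>UNIV. 0 \<le> Re (ip x x)"
proof
  fix x :: 'a show "0 \<le> Re (ip x x)" by (rule ip_pos(2))
qed

abbreviation nrm where "nrm x \<equiv> hnorm ip x"

lemma hn_q: "nrm x = sqrt (qf ip x)" unfolding hnorm_def qf_def ..
lemma hn_nonneg: "0 \<le> nrm x" unfolding hnorm_def using ip_pos(2)[of x] by simp
lemma hn_sq: "(nrm x)^2 = Re (ip x x)" unfolding hnorm_def using ip_pos(2)[of x] by simp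
lemma hn_tri: "nrm (x + y) \<le> nrm x + nrm y"
  unfolding hn_q using q_tri[OF ip_sesq ip_psd] by blast
lemma hn_tri3: "nrm (x - y) \<le> nrm x + nrm y"
  unfolding hn_q using q_tri3[OF ip_sesq ip_psd] by blast
lemma hn_sc: "nrm (sc a x) = cmod a * nrm x"
  unfolding hn_q using q_sc[OF ip_sesq ip_psd] by (simp add: real_sqrt_mult)
lemma hn_uminus: "nrm (- x) = nrm x"
  unfolding hn_q using q_uminus[OF ip_sesq ip_psd] by simp
lemma hn_commute: "nrm (x - y) = nrm (y - x)"
  by (metis hn_uminus minus_diff_eq)
lemma hn_0[simp]: "nrm 0 = 0" unfolding hnorm_def by simp
lemma hn_eq0: "nrm x = 0 \<Longrightarrow> x = 0"
proof -
  assume "nrm x = 0"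
  hence "Re (ip x x) = 0" unfolding hnorm_def using ip_pos by simp
  hence "ip x x = 0" using ip_pos by (simp add: complex_eq_iff)
  thus "x = 0" by (rule ip_def0)
qed
lemma hn_tri_diff: "nrm (x - z) \<le> nrm (x - y) + nrm (y - z)"
  using hn_tri[of "x - y" "y - z"] by simp
lemma hn_rev: "\<bar>nrm x - nrm y\<bar> \<le> nrm (x - y)"
  unfolding hn_q using q_tri_diff[OF ip_sesq ip_psd] by blast

definition conv :: "(nat \<Rightarrow> 'a) \<Rightarrow> 'a \<Rightarrow> bool" where
  "conv X x \<longleftrightarrow> (\<lambda>k. nrm (X k - x)) \<longlonglongrightarrow> 0"
definition hcauchy :: "(nat \<Rightarrow> 'a) \<Rightarrow> bool" where
  "hcauchy X \<longleftrightarrow> (\<forall>e>0. \<exists>N. \<forall>m\<ge>N. \<forall>k\<ge>N. nrm (X m - X k) < e)"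

lemma null_sandwich: "(f \<longlongrightarrow> (0::real)) F \<Longrightarrow> (\<And>k. 0 \<le> g k) \<Longrightarrow> (\<And>k. g k \<le> f k) \<Longrightarrow> (g \<longlongrightarrow> 0) F"
  by (rule real_tendsto_sandwich[of "\<lambda>_. 0" g F f]) (auto)

lemma conv_const: "conv (\<lambda>k. x) x" unfolding conv_def by simp
lemma conv_add: assumes "conv X x" "conv Y y" shows "conv (\<lambda>k. X k + Y k) (x + y)"
  unfolding conv_def
proof (rule null_sandwich[where f="\<lambda>k. nrm (X k - x) + nrm (Y k - y)"])
  show "(\<lambda>k. nrm (X k - x) + nrm (Y k - y)) \<longlonglongrightarrow> 0"
    using tendsto_add[OF assms[unfolded conv_def]] by simp
  show "0 \<le> nrm (X k + Y k - (x + y))" for k by (rule hn_nonneg)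
  show "nrm (X k + Y k - (x + y)) \<le> nrm (X k - x) + nrm (Y k - y)" for k
    using hn_tri[of "X k - x" "Y k - y"] by (simp add: algebra_simps)
qed
lemma conv_uminus: assumes "conv X x" shows "conv (\<lambda>k. - X k) (- x)"
proof -
  have "nrm (- X k - - x) = nrm (X k - x)" for k
  proof -
    have "- X k - - x = - (X k - x)" by simp
    thus ?thesis by (simp only: hn_uminus)
  qed
  thus ?thesis using assms unfolding conv_def by simp
qed
lemma conv_diff: assumes "conv X x" "conv Y y" shows "conv (\<lambda>k. X k - Y k) (x - y)"
  using conv_add[OF assms(1) conv_uminus[OF assms(2)]] by simp
lemma conv_sc: assumes "conv X x" shows "conv (\<lambda>k. sc a (X k)) (sc a x)"
proof -
  have "(\<lambda>k. cmod a * nrm (X k - x)) \<longlonglongrightarrow> cmod a * 0"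
    using assms unfolding conv_def by (intro tendsto_mult tendsto_const)
  thus ?thesis unfolding conv_def by (simp add: sc_diff[symmetric] hn_sc)
qed
lemma conv_unique: assumes "conv X x" "conv X y" shows "x = y"
proof -
  have "(\<lambda>k. nrm (X k - x) + nrm (X k - y)) \<longlonglongrightarrow> 0"
    using tendsto_add[OF assms[unfolded conv_def]] by simp
  moreover have "nrm (x - y) \<le> nrm (X k - x) + nrm (X k - y)" for k
    using hn_tri_diff[where x=x and y="X k" and z=y] hn_commute[of x "X k"] by simp
  ultimately have "nrm (x - y) \<le> 0"
    by (intro LIMSEQ_le_const[of "\<lambda>k. nrm (X k - x) + nrm (X k - y)"]) auto
  hence "nrm (x - y) = 0" using hn_nonneg by (metis antisym)
  thus ?thesis by (metis hn_eq0 right_minus_eq)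
qed
lemma conv_hcauchy: assumes "conv X x" shows "hcauchy X"
  unfolding hcauchy_def
proof (intro allI impI)
  fix e :: real assume e: "e > 0"
  obtain N where N: "\<forall>k\<ge>N. nrm (X k - x) < e / 2"
  proof -
    have "e / 2 > 0" using e by simp
    then obtain N where "\<forall>k\<ge>N. norm (nrm (X k - x) - 0) < e / 2"
      using assms unfolding conv_def LIMSEQ_iff by blast
    thus ?thesis using that by (simp add: abs_of_nonneg hn_nonneg)
  qed
  show "\<exists>N. \<forall>m\<ge>N. \<forall>k\<ge>N. nrm (X m - X k) < e"
  proof (intro exI allI impI)
    fix m k assume "N \<le> m" "N \<le> k"
    hence "nrm (X m - x) < e / 2" "nrm (X k - x) < e / 2" using N by auto
    moreover have "nrm (X m - X k) \<le> nrm (X m - x) + nrm (x - X k)" by (rule hn_tri_diff)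
    moreover have "nrm (x - X k) = nrm (X k - x)" by (rule hn_commute)
    ultimately show "nrm (X m - X k) < e" by linarith
  qed
qed
lemma hcauchy_conv: "hcauchy X \<Longrightarrow> \<exists>x. conv X x"
  unfolding hcauchy_def conv_def using complete by blast
lemma conv_nrm: assumes "conv X x" shows "(\<lambda>k. nrm (X k)) \<longlonglongrightarrow> nrm x"
proof -
  have "(\<lambda>k. nrm (X k) - nrm x) \<longlonglongrightarrow> 0"
  proof (rule tendsto_rabs_zero_cancel, rule null_sandwich)
    show "(\<lambda>k. nrm (X k - x)) \<longlonglongrightarrow> 0" using assms unfolding conv_def .
    show "\<bar>nrm (X k) - nrm x\<bar> \<le> nrm (X k - x)" for k by (rule hn_rev)
  qed auto
  thus ?thesis by (simp add: LIM_zero_cancel)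
qed

end


context hs begin

definition tcauchy :: "'a form \<Rightarrow> (nat \<Rightarrow> 'a) \<Rightarrow> bool" where
  "tcauchy t X \<longleftrightarrow> (\<forall>n. X n \<in> fdom t) \<and>
     (\<forall>e>0. \<exists>N. \<forall>m\<ge>N. \<forall>n\<ge>N. sqrt (qf (fval t) (X m - X n)) < e)"
definition adm :: "'a form \<Rightarrow> 'a \<Rightarrow> (nat \<Rightarrow> 'a) \<Rightarrow> bool" where
  "adm t x X \<longleftrightarrow> tcauchy t X \<and> conv X x"
definition tl :: "'a form \<Rightarrow> (nat \<Rightarrow> 'a) \<Rightarrow> real" where
  "tl t X = lim (\<lambda>n. qf (fval t) (X n))"
definition Dh :: "'a form \<Rightarrow> 'a set" where "Dh t = {x. \<exists>X. adm t x X}"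
definition gh :: "'a form \<Rightarrow> 'a \<Rightarrow> real" where "gh t x = Inf {tl t X | X. adm t x X}"

lemma form_sesq: "is_form sc ip t \<Longrightarrow> sesq (fdom t) (fval t)"
  unfolding is_form_def sesq_def by blast
lemma form_psd: "positive_form t \<Longrightarrow> \<forall>x\<in>fdom t. 0 \<le> Re (fval t x x)"
  unfolding positive_form_def by blast

context
  fixes t assumes F: "is_form sc ip t" and Pt: "positive_form t"
begin

abbreviation "Q \<equiv> qf (fval t)"
abbreviation "DD \<equiv> fdom t"
lemma tS: "sesq DD (fval t)" using form_sesq[OF F] .
lemma tP: "\<forall>x\<in>DD. 0 \<le> Re (fval t x x)" using form_psd[OF Pt] .
lemma tD: "lin_subspace sc DD" using S_ls[OF tS] .
lemma Q_nonneg: "x \<in> DD \<Longrightarrow> 0 \<le> Q x" using q_nonneg[OF tS tP] .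

lemma tc_in: "tcauchy t X \<Longrightarrow> X n \<in> DD" unfolding tcauchy_def by blast

lemma tc_lim: assumes X: "tcauchy t X"
  shows "(\<lambda>n. Q (X n)) \<longlonglongrightarrow> tl t X" "(\<lambda>n. sqrt (Q (X n))) \<longlonglongrightarrow> sqrt (tl t X)"
proof -
  have in_: "\<And>n. X n \<in> DD" using X tc_in by blast
  have "Cauchy (\<lambda>n. sqrt (Q (X n)))"
  proof (rule metric_CauchyI)
    fix e :: real assume "e > 0"
    then obtain N where N: "\<forall>m\<ge>N. \<forall>n\<ge>N. sqrt (Q (X m - X n)) < e" using X unfolding tcauchy_def by blast
    show "\<exists>M. \<forall>m\<ge>M. \<forall>n\<ge>M. dist (sqrt (Q (X m))) (sqrt (Q (X n))) < e"
    proof (intro exI allI impI)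
      fix m n assume "N \<le> m" "N \<le> n"
      hence "sqrt (Q (X m - X n)) < e" using N by blast
      thus "dist (sqrt (Q (X m))) (sqrt (Q (X n))) < e"
        using q_tri_diff[OF tS tP in_ in_, of m n] unfolding dist_real_def by linarith
    qed
  qed
  then obtain L where L: "(\<lambda>n. sqrt (Q (X n))) \<longlonglongrightarrow> L" using Cauchy_convergent_iff convergent_def by blast
  have L0: "0 \<le> L" by (rule LIMSEQ_le_const[OF L]) (use Q_nonneg[OF in_] in auto)
  have "(\<lambda>n. (sqrt (Q (X n)))^2) \<longlonglongrightarrow> L^2" by (intro tendsto_power L)
  hence l2: "(\<lambda>n. Q (X n)) \<longlonglongrightarrow> L^2" using Q_nonneg[OF in_] by simp
  hence "tl t X = L^2" unfolding tl_def by (rule limI)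
  thus "(\<lambda>n. Q (X n)) \<longlonglongrightarrow> tl t X" using l2 by simp
  show "(\<lambda>n. sqrt (Q (X n))) \<longlonglongrightarrow> sqrt (tl t X)" using L L0 \<open>tl t X = L^2\<close> by simp
qed

lemma tl_nonneg: "tcauchy t X \<Longrightarrow> 0 \<le> tl t X"
  by (rule LIMSEQ_le_const[OF tc_lim(1)]) (auto intro: Q_nonneg tc_in)

lemma tl_le: "tcauchy t X \<Longrightarrow> \<forall>n\<ge>N. Q (X n) \<le> c \<Longrightarrow> tl t X \<le> c"
  by (rule LIMSEQ_le_const2[OF tc_lim(1)]) auto

lemma tc_const: "x \<in> DD \<Longrightarrow> tcauchy t (\<lambda>n. x)"
  unfolding tcauchy_def using S_02[OF tS ls_0[OF tD]] by (auto simp: qf_def)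
lemma tl_const: "x \<in> DD \<Longrightarrow> tl t (\<lambda>n. x) = Q x"
  unfolding tl_def by simp

lemma tc_add: assumes X: "tcauchy t X" and Y: "tcauchy t Y" shows "tcauchy t (\<lambda>n. X n + Y n)"
  unfolding tcauchy_def
proof (intro conjI allI impI)
  show "X n + Y n \<in> DD" for n using tc_in X Y ls_add[OF tD] by blast
  fix e :: real assume "e > 0"
  then obtain N1 N2 where N1: "\<forall>m\<ge>N1. \<forall>n\<ge>N1. sqrt (Q (X m - X n)) < e/2"
    and N2: "\<forall>m\<ge>N2. \<forall>n\<ge>N2. sqrt (Q (Y m - Y n)) < e/2"
    using X Y unfolding tcauchy_def by (meson half_gt_zero)
  show "\<exists>N. \<forall>m\<ge>N. \<forall>n\<ge>N. sqrt (Q (X m + Y m - (X n + Y n))) < e"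
  proof (intro exI allI impI)
    fix m n assume mn: "max N1 N2 \<le> m" "max N1 N2 \<le> n"
    have eq: "X m + Y m - (X n + Y n) = (X m - X n) + (Y m - Y n)" by (simp add: algebra_simps)
    have d: "X m - X n \<in> DD" "Y m - Y n \<in> DD" using tc_in X Y ls_diff[OF tD] by blast+
    have a: "sqrt (Q (X m - X n)) < e/2" using N1 mn by simp
    have b: "sqrt (Q (Y m - Y n)) < e/2" using N2 mn by simp
    have "sqrt (Q (X m + Y m - (X n + Y n))) \<le> sqrt (Q (X m - X n)) + sqrt (Q (Y m - Y n))"
      unfolding eq by (rule q_tri[OF tS tP d])
    thus "sqrt (Q (X m + Y m - (X n + Y n))) < e" using a b by linarith
  qed
qed

lemma tc_sc: assumes X: "tcauchy t X" shows "tcauchy t (\<lambda>n. sc a (X n))"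
  unfolding tcauchy_def
proof (intro conjI allI impI)
  show "sc a (X n) \<in> DD" for n using tc_in X ls_sc[OF tD] by blast
  fix e :: real assume e: "e > 0"
  hence "e / (cmod a + 1) > 0" by (simp add: add_nonneg_pos)
  then obtain N where N: "\<forall>m\<ge>N. \<forall>n\<ge>N. sqrt (Q (X m - X n)) < e / (cmod a + 1)"
    using X unfolding tcauchy_def by blast
  show "\<exists>N. \<forall>m\<ge>N. \<forall>n\<ge>N. sqrt (Q (sc a (X m) - sc a (X n))) < e"
  proof (intro exI allI impI)
    fix m n assume mn: "N \<le> m" "N \<le> n"
    have d: "X m - X n \<in> DD" using tc_in X ls_diff[OF tD] by blast
    have "sqrt (Q (sc a (X m) - sc a (X n))) = cmod a * sqrt (Q (X m - X n))"
      unfolding sc_diff[symmetric] using q_sc[OF tS tP d] by (simp add: real_sqrt_mult)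
    also have "\<dots> \<le> (cmod a + 1) * sqrt (Q (X m - X n))"
      using Q_nonneg[OF d] by (intro mult_right_mono) auto
    also have "\<dots> < (cmod a + 1) * (e / (cmod a + 1))"
      using N mn by (intro mult_strict_left_mono) (auto simp: add_nonneg_pos)
    also have "\<dots> = e"
    proof -
      have "cmod a + 1 \<noteq> 0" using norm_ge_zero[of a] by linarith
      thus ?thesis by simp
    qed
    finally show "sqrt (Q (sc a (X m) - sc a (X n))) < e" .
  qed
qed

lemma tc_uminus: "tcauchy t X \<Longrightarrow> tcauchy t (\<lambda>n. - X n)"
  using tc_sc[of X "-1"] by (simp add: sc_m1)
lemma tc_diff: "tcauchy t X \<Longrightarrow> tcauchy t Y \<Longrightarrow> tcauchy t (\<lambda>n. X n - Y n)"
  using tc_add[of X "\<lambda>n. - Y n"] tc_uminus[of Y] by simp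

lemma tc_subseq: assumes X: "tcauchy t X" and r: "\<And>k. k \<le> r k" shows "tcauchy t (\<lambda>k. X (r k))"
  unfolding tcauchy_def
proof (intro conjI allI impI)
  show "X (r n) \<in> DD" for n using tc_in X by blast
  fix e :: real assume "e > 0"
  then obtain N where N: "\<forall>m\<ge>N. \<forall>n\<ge>N. sqrt (Q (X m - X n)) < e" using X unfolding tcauchy_def by blast
  show "\<exists>N. \<forall>m\<ge>N. \<forall>n\<ge>N. sqrt (Q (X (r m) - X (r n))) < e"
    by (rule exI[of _ N]) (metis N r order_trans)
qed

lemma tl_para: assumes X: "tcauchy t X" and Y: "tcauchy t Y"
  shows "tl t (\<lambda>n. X n + Y n) + tl t (\<lambda>n. X n - Y n) = 2 * tl t X + 2 * tl t Y"
proof -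
  have "(\<lambda>n. Q (X n + Y n) + Q (X n - Y n)) \<longlonglongrightarrow> tl t (\<lambda>n. X n + Y n) + tl t (\<lambda>n. X n - Y n)"
    using tc_lim(1)[OF tc_add[OF X Y]] tc_lim(1)[OF tc_diff[OF X Y]] by (rule tendsto_add)
  moreover have "(\<lambda>n. Q (X n + Y n) + Q (X n - Y n)) = (\<lambda>n. 2 * Q (X n) + 2 * Q (Y n))"
    using q_para[OF tS tP] tc_in X Y by blast
  moreover have "(\<lambda>n. 2 * Q (X n) + 2 * Q (Y n)) \<longlonglongrightarrow> 2 * tl t X + 2 * tl t Y"
    using tc_lim(1)[OF X] tc_lim(1)[OF Y] by (intro tendsto_add tendsto_mult tendsto_const)
  ultimately show ?thesis using LIMSEQ_unique by metis
qed

lemma tl_sc: assumes X: "tcauchy t X" shows "tl t (\<lambda>n. sc a (X n)) = (cmod a)^2 * tl t X"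
proof -
  have "(\<lambda>n. Q (sc a (X n))) \<longlonglongrightarrow> tl t (\<lambda>n. sc a (X n))" using tc_lim(1)[OF tc_sc[OF X]] .
  moreover have "(\<lambda>n. Q (sc a (X n))) = (\<lambda>n. (cmod a)^2 * Q (X n))"
    using q_sc[OF tS tP] tc_in X by blast
  moreover have "(\<lambda>n. (cmod a)^2 * Q (X n)) \<longlonglongrightarrow> (cmod a)^2 * tl t X"
    using tc_lim(1)[OF X] by (intro tendsto_mult tendsto_const)
  ultimately show ?thesis using LIMSEQ_unique by metis
qed

lemma adm_add: "adm t x X \<Longrightarrow> adm t y Y \<Longrightarrow> adm t (x + y) (\<lambda>n. X n + Y n)"
  unfolding adm_def using tc_add conv_add by blast
lemma adm_diff: "adm t x X \<Longrightarrow> adm t y Y \<Longrightarrow> adm t (x - y) (\<lambda>n. X n - Y n)"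
  unfolding adm_def using tc_diff conv_diff by blast
lemma adm_sc: "adm t x X \<Longrightarrow> adm t (sc a x) (\<lambda>n. sc a (X n))"
  unfolding adm_def using tc_sc conv_sc by blast
lemma adm_const: "x \<in> DD \<Longrightarrow> adm t x (\<lambda>n. x)"
  unfolding adm_def using tc_const conv_const by blast

lemma D_Dh: "DD \<subseteq> Dh t" unfolding Dh_def using adm_const by blast
lemma Dh_ls: "lin_subspace sc (Dh t)"
  unfolding lin_subspace_def Dh_def
  using adm_add adm_sc adm_const ls_0[OF tD] by blast

lemma gh_le: "adm t x X \<Longrightarrow> gh t x \<le> tl t X"
  unfolding gh_def adm_def
  by (rule cInf_lower) (auto intro!: bdd_belowI[of _ 0] tl_nonneg simp: adm_def)
lemma gh_nonneg: "x \<in> Dh t \<Longrightarrow> 0 \<le> gh t x"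
  unfolding gh_def Dh_def
  by (rule cInf_greatest) (auto intro: tl_nonneg simp: adm_def)
lemma gh_approx: assumes "x \<in> Dh t" "e > 0" shows "\<exists>X. adm t x X \<and> tl t X < gh t x + e"
proof -
  have ne: "{tl t X | X. adm t x X} \<noteq> {}" using assms unfolding Dh_def by blast
  have "Inf {tl t X | X. adm t x X} < gh t x + e" using assms unfolding gh_def by simp
  then obtain v where "v \<in> {tl t X | X. adm t x X}" "v < gh t x + e"
    using cInf_lessD[OF ne] by blast
  thus ?thesis by blast
qed
lemma gh_D: "x \<in> DD \<Longrightarrow> gh t x \<le> Q x"
  using gh_le[OF adm_const] tl_const by simp
lemma gh_0: "gh t 0 = 0"
proof -
  have "0 \<in> DD" using ls_0[OF tD] .
  hence "gh t 0 \<le> Q 0" by (rule gh_D)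
  moreover have "Q 0 = 0" using S_02[OF tS] ls_0[OF tD] by (simp add: qf_def)
  moreover have "0 \<le> gh t 0" using gh_nonneg D_Dh \<open>0 \<in> DD\<close> by blast
  ultimately show ?thesis by simp
qed

lemma gh_sc_le: assumes x: "x \<in> Dh t" shows "gh t (sc a x) \<le> (cmod a)^2 * gh t x"
proof (rule field_le_epsilon)
  fix e :: real assume e: "e > 0"
  have "e / ((cmod a)^2 + 1) > 0" using e by (simp add: add_nonneg_pos)
  then obtain X where X: "adm t x X" "tl t X < gh t x + e / ((cmod a)^2 + 1)" using gh_approx x by blast
  have "gh t (sc a x) \<le> tl t (\<lambda>n. sc a (X n))" using gh_le adm_sc X(1) by blast
  also have "\<dots> = (cmod a)^2 * tl t X" using tl_sc X(1) unfolding adm_def by blast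
  also have "\<dots> \<le> (cmod a)^2 * (gh t x + e / ((cmod a)^2 + 1))"
    using X(2) by (intro mult_left_mono) auto
  also have "\<dots> \<le> (cmod a)^2 * gh t x + e"
  proof -
    have r: "(cmod a)^2 / ((cmod a)^2 + 1) \<le> 1" by (simp add: divide_le_eq add_nonneg_pos)
    have "(cmod a)^2 * (e / ((cmod a)^2 + 1)) = e * ((cmod a)^2 / ((cmod a)^2 + 1))" by simp
    also have "\<dots> \<le> e * 1" using e r by (intro mult_left_mono) auto
    finally have "(cmod a)^2 * (e / ((cmod a)^2 + 1)) \<le> e" by simp
    thus ?thesis by (simp add: distrib_left)
  qed
  finally show "gh t (sc a x) \<le> (cmod a)^2 * gh t x + e" .
qed

lemma gh_hom: assumes x: "x \<in> Dh t" shows "gh t (sc a x) = (cmod a)^2 * gh t x"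
proof (cases "a = 0")
  case True thus ?thesis using gh_0 by simp
next
  case False
  have ax: "sc a x \<in> Dh t" using ls_sc[OF Dh_ls] x by blast
  have "gh t x = gh t (sc (1/a) (sc a x))" using False by (simp add: sc_sc)
  also have "\<dots> \<le> (cmod (1/a))^2 * gh t (sc a x)" by (rule gh_sc_le[OF ax])
  finally have "(cmod a)^2 * gh t x \<le> (cmod a)^2 * ((cmod (1/a))^2 * gh t (sc a x))"
    by (intro mult_left_mono) auto
  also have "\<dots> = gh t (sc a x)" using False by (simp add: norm_divide power_divide)
  finally show ?thesis using gh_sc_le[OF x, of a] by simp
qed

lemma gh_para_le: assumes x: "x \<in> Dh t" and y: "y \<in> Dh t"
  shows "gh t (x + y) + gh t (x - y) \<le> 2 * gh t x + 2 * gh t y"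
proof (rule field_le_epsilon)
  fix e :: real assume e: "e > 0"
  obtain X where X: "adm t x X" "tl t X < gh t x + e / 4" using gh_approx x e by (meson zero_less_divide_iff zero_less_numeral)
  obtain Y where Y: "adm t y Y" "tl t Y < gh t y + e / 4" using gh_approx y e by (meson zero_less_divide_iff zero_less_numeral)
  have "gh t (x + y) + gh t (x - y) \<le> tl t (\<lambda>n. X n + Y n) + tl t (\<lambda>n. X n - Y n)"
    using gh_le[OF adm_add[OF X(1) Y(1)]] gh_le[OF adm_diff[OF X(1) Y(1)]] by simp
  also have "\<dots> = 2 * tl t X + 2 * tl t Y" using tl_para X(1) Y(1) unfolding adm_def by blast
  finally show "gh t (x + y) + gh t (x - y) \<le> 2 * gh t x + 2 * gh t y + e" using X(2) Y(2) by linarith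
qed

lemma gh_para: assumes x: "x \<in> Dh t" and y: "y \<in> Dh t"
  shows "gh t (x + y) + gh t (x - y) = 2 * gh t x + 2 * gh t y"
proof -
  have xy: "x + y \<in> Dh t" "x - y \<in> Dh t" using ls_add[OF Dh_ls] ls_diff[OF Dh_ls] x y by blast+
  have "gh t ((x + y) + (x - y)) + gh t ((x + y) - (x - y)) \<le> 2 * gh t (x + y) + 2 * gh t (x - y)"
    using gh_para_le[OF xy] .
  moreover have "(x + y) + (x - y) = sc 2 x" "(x + y) - (x - y) = sc 2 y" by (simp_all add: sc_2)
  moreover have "gh t (sc 2 x) = 4 * gh t x" "gh t (sc 2 y) = 4 * gh t y" using gh_hom x y by simp_all
  ultimately have "2 * gh t x + 2 * gh t y \<le> gh t (x + y) + gh t (x - y)" by simp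
  thus ?thesis using gh_para_le[OF x y] by simp
qed

end
end


context hs begin

lemma ls_sum: assumes ls: "lin_subspace sc S"
  shows "finite I \<Longrightarrow> (\<And>i. i \<in> I \<Longrightarrow> v i \<in> S) \<Longrightarrow> (\<Sum>i\<in>I. v i) \<in> S"
  by (induction I rule: finite_induct) (auto intro: ls_0[OF ls] ls_add[OF ls])

lemma q_sum: assumes S: "sesq D f" and P: "\<forall>x\<in>D. 0 \<le> Re (f x x)"
  shows "finite I \<Longrightarrow> (\<And>i. i \<in> I \<Longrightarrow> v i \<in> D) \<Longrightarrow>
    sqrt (qf f (\<Sum>i\<in>I. v i)) \<le> (\<Sum>i\<in>I. sqrt (qf f (v i)))"
proof (induction I rule: finite_induct)
  case empty
  have "0 \<in> D" using ls_0[OF S_ls[OF S]] .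
  thus ?case using S_02[OF S] by (simp add: qf_def)
next
  case (insert i I)
  have "(\<Sum>i\<in>I. v i) \<in> D" using ls_sum[OF S_ls[OF S]] insert by auto
  hence "sqrt (qf f (v i + (\<Sum>i\<in>I. v i))) \<le> sqrt (qf f (v i)) + sqrt (qf f (\<Sum>i\<in>I. v i))"
    using q_tri[OF S P] insert by auto
  thus ?case using insert by auto
qed

lemma hn_sum: "finite I \<Longrightarrow> nrm (\<Sum>i\<in>I. v i) \<le> (\<Sum>i\<in>I. nrm (v i))"
  unfolding hn_q using q_sum[OF ip_sesq ip_psd] by blast

lemma conv_sum: "finite I \<Longrightarrow> (\<And>i. i \<in> I \<Longrightarrow> conv (X i) (x i)) \<Longrightarrow>
   conv (\<lambda>n. \<Sum>i\<in>I. X i n) (\<Sum>i\<in>I. x i)"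
  by (induction I rule: finite_induct) (auto intro: conv_add simp: conv_const)

lemma conv_subseq: "conv X x \<Longrightarrow> strict_mono r \<Longrightarrow> conv (\<lambda>k. X (r k)) x"
  unfolding conv_def using LIMSEQ_subseq_LIMSEQ[of "\<lambda>k. nrm (X k - x)" 0 r] by (simp add: o_def)

lemma geom_sum: "(\<Sum>j\<in>{K..<K + d}. (1/2::real)^j) = 2 * (1/2)^K - 2 * (1/2)^(K + d)"
proof (induction d)
  case 0 thus ?case by simp
next
  case (Suc d)
  have "{K..<K + Suc d} = insert (K + d) {K..<K + d}" by auto
  hence "(\<Sum>j\<in>{K..<K + Suc d}. (1/2::real)^j) = (1/2)^(K+d) + (\<Sum>j\<in>{K..<K + d}. (1/2::real)^j)" by simp
  thus ?case using Suc by simp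
qed

lemma geom_bound: "(\<Sum>j\<in>{K..<K'}. (1/2::real)^j) \<le> 2 * (1/2)^K"
proof (cases "K \<le> K'")
  case True
  then obtain d where "K' = K + d" using le_Suc_ex by blast
  thus ?thesis using geom_sum by simp
next
  case False thus ?thesis by simp
qed

lemma rec_seq: fixes Th :: "nat \<Rightarrow> nat"
  shows "\<exists>n::nat\<Rightarrow>nat. strict_mono n \<and> (\<forall>K. Th K \<le> n K)"
proof -
  define n where "n = rec_nat (Th 0) (\<lambda>j v. max (v + 1) (Th (Suc j)))"
  have n0: "n 0 = Th 0" and nS: "n (Suc j) = max (n j + 1) (Th (Suc j))" for j unfolding n_def by simp_all
  have "strict_mono n" unfolding strict_mono_Suc_iff by (simp add: nS less_max_iff_disj)
  moreover have "Th K \<le> n K" for K by (cases K) (simp_all add: n0 nS)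
  ultimately show ?thesis by blast
qed

context
  fixes t assumes F: "is_form sc ip t" and Pt: "positive_form t"
begin

lemma tc_sum: "finite I \<Longrightarrow> (\<And>i. i \<in> I \<Longrightarrow> tcauchy t (X i)) \<Longrightarrow> tcauchy t (\<lambda>n. \<Sum>i\<in>I. X i n)"
proof (induction I rule: finite_induct)
  case empty thus ?case using tc_const[OF F Pt ls_0[OF tD[OF F Pt]]] by simp
next
  case (insert i I) thus ?case using tc_add[OF F Pt] by auto
qed

lemma gh_2: "a \<in> Dh t \<Longrightarrow> b \<in> Dh t \<Longrightarrow> gh t (a + b) \<le> 2 * gh t a + 2 * gh t b"
  using gh_para[OF F Pt, of a b] gh_nonneg[OF F Pt, of "a - b"] ls_diff[OF Dh_ls[OF F Pt]] by auto

lemma gh_commdiff: "a \<in> Dh t \<Longrightarrow> b \<in> Dh t \<Longrightarrow> gh t (a - b) = gh t (b - a)"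
  using gh_hom[OF F Pt, of "a - b" "-1"] ls_diff[OF Dh_ls[OF F Pt]] by (simp add: sc_m1)


abbreviation "QQ \<equiv> qf (fval t)"

lemma tc_ev: "tcauchy t X \<Longrightarrow> e > 0 \<Longrightarrow> eventually (\<lambda>n. \<forall>a\<ge>n. \<forall>b\<ge>n. sqrt (QQ (X a - X b)) < e) sequentially"
  unfolding tcauchy_def eventually_sequentially by (meson order_trans)

lemma p_pow: "x \<in> fdom t \<Longrightarrow> QQ x < (1/4)^j \<Longrightarrow> sqrt (QQ x) < (1/2)^j"
proof -
  assume "QQ x < (1/4)^j"
  hence "sqrt (QQ x) < sqrt ((1/4)^j)" by simp
  also have "sqrt ((1/4::real)^j) = (1/2)^j"
    by (metis real_sqrt_power power_divide real_sqrt_divide real_sqrt_one real_sqrt_four)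
  finally show ?thesis .
qed

lemma gh_closed:
  assumes xi: "\<And>k. \<xi> k \<in> Dh t"
    and gc: "\<And>e. e > 0 \<Longrightarrow> \<exists>N. \<forall>m\<ge>N. \<forall>k\<ge>N. gh t (\<xi> m - \<xi> k) < e"
    and cv: "conv \<xi> x"
  shows "x \<in> Dh t \<and> (\<lambda>k. gh t (\<xi> k - x)) \<longlonglongrightarrow> 0"
proof -
  have DhL: "lin_subspace sc (Dh t)" by (rule Dh_ls[OF F Pt])
  have DL: "lin_subspace sc (fdom t)" by (rule tD[OF F Pt])
  have "\<forall>j. \<exists>N. \<forall>m\<ge>N. \<forall>k\<ge>N. gh t (\<xi> m - \<xi> k) < (1/4)^j" using gc by simp
  then obtain N0 where N0: "\<And>j m k. N0 j \<le> m \<Longrightarrow> N0 j \<le> k \<Longrightarrow> gh t (\<xi> m - \<xi> k) < (1/4)^j" by metis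
  obtain N where Nm: "strict_mono N" and NN0: "\<And>j. N0 j \<le> N j" using rec_seq[of N0] by blast
  have Nmono: "\<And>i j. i \<le> j \<Longrightarrow> N i \<le> N j" using Nm strict_mono_less_eq by blast
  define \<eta> where "\<eta> j = \<xi> (N j)" for j
  define d where "d j = \<eta> (Suc j) - \<eta> j" for j
  have \<eta>D: "\<And>j. \<eta> j \<in> Dh t" unfolding \<eta>_def using xi by simp
  have dD: "\<And>j. d j \<in> Dh t" unfolding d_def using \<eta>D ls_diff[OF DhL] by blast
  have gd: "gh t (d j) < (1/4)^j" for j
  proof -
    have "N0 j \<le> N j" by (rule NN0)
    moreover have "N j \<le> N (Suc j)" by (rule Nmono) simp
    ultimately show ?thesis unfolding d_def \<eta>_def using N0 by (meson order_trans)
  qed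
  have c\<eta>: "conv \<eta> x" unfolding \<eta>_def using conv_subseq[OF cv Nm] .
  have "\<forall>j. \<exists>U. adm t (d j) U \<and> tl t U < (1/4)^j"
  proof
    fix j
    have "(1/4::real)^j - gh t (d j) > 0" using gd[of j] by simp
    then obtain U where "adm t (d j) U" "tl t U < gh t (d j) + ((1/4)^j - gh t (d j))"
      using gh_approx[OF F Pt dD] by blast
    thus "\<exists>U. adm t (d j) U \<and> tl t U < (1/4)^j" by auto
  qed
  then obtain U where U: "\<And>j. adm t (d j) (U j)" and Ul: "\<And>j. tl t (U j) < (1/4)^j" by metis
  obtain V where V: "adm t (\<eta> 0) V" using \<eta>D[of 0] unfolding Dh_def by blast
  have Utc: "\<And>j. tcauchy t (U j)" and Ucv: "\<And>j. conv (U j) (d j)" using U unfolding adm_def by auto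
  have Vtc: "tcauchy t V" and Vcv: "conv V (\<eta> 0)" using V unfolding adm_def by auto
  have UD: "\<And>j n. U j n \<in> fdom t" using Utc tc_in[OF F Pt] by blast
  have VD: "\<And>n. V n \<in> fdom t" using Vtc tc_in[OF F Pt] by blast
  have "\<forall>j. \<exists>M. \<forall>n\<ge>M. QQ (U j n) < (1/4)^j"
  proof
    fix j
    have "eventually (\<lambda>n. QQ (U j n) < (1/4)^j) sequentially"
      using order_tendstoD(2)[OF tc_lim(1)[OF F Pt Utc] Ul] .
    thus "\<exists>M. \<forall>n\<ge>M. QQ (U j n) < (1/4)^j" by (simp add: eventually_sequentially)
  qed
  then obtain M where M: "\<And>j n. M j \<le> n \<Longrightarrow> QQ (U j n) < (1/4)^j" by metis
  define c where "c K = (1/2::real)^K / (real K + 1)" for K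
  have cpos: "\<And>K. c K > 0" unfolding c_def by simp
  define P where "P K n \<longleftrightarrow> (\<forall>j\<in>{..<K}. M j \<le> n) \<and>
     (\<forall>j\<in>{..<K}. \<forall>a\<ge>n. \<forall>b\<ge>n. sqrt (QQ (U j a - U j b)) < c K) \<and>
     (\<forall>a\<ge>n. \<forall>b\<ge>n. sqrt (QQ (V a - V b)) < (1/2)^K) \<and>
     nrm (V n - \<eta> 0) < c K \<and> (\<forall>j\<in>{..<K}. nrm (U j n - d j) < c K)" for K n
  have evP: "eventually (P K) sequentially" for K
  proof -
    have e1: "eventually (\<lambda>n. \<forall>j\<in>{..<K}. M j \<le> n) sequentially"
      by (rule eventually_ball_finite) (auto simp: eventually_ge_at_top)
    have e2: "eventually (\<lambda>n. \<forall>j\<in>{..<K}. \<forall>a\<ge>n. \<forall>b\<ge>n. sqrt (QQ (U j a - U j b)) < c K) sequentially"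
      by (rule eventually_ball_finite) (auto intro: tc_ev[OF Utc cpos])
    have e3: "eventually (\<lambda>n. \<forall>a\<ge>n. \<forall>b\<ge>n. sqrt (QQ (V a - V b)) < (1/2)^K) sequentially"
      by (rule tc_ev[OF Vtc]) simp
    have e4: "eventually (\<lambda>n. nrm (V n - \<eta> 0) < c K) sequentially"
      using order_tendstoD(2)[OF Vcv[unfolded conv_def] cpos] .
    have e5: "eventually (\<lambda>n. \<forall>j\<in>{..<K}. nrm (U j n - d j) < c K) sequentially"
      by (rule eventually_ball_finite) (auto intro: order_tendstoD(2)[OF Ucv[unfolded conv_def] cpos])
    show ?thesis unfolding P_def
      using eventually_conj[OF e1 eventually_conj[OF e2 eventually_conj[OF e3 eventually_conj[OF e4 e5]]]] by simp
  qed
  hence "\<forall>K. \<exists>T. \<forall>n\<ge>T. P K n" by (simp add: eventually_sequentially)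
  then obtain Th where Th: "\<And>K n. Th K \<le> n \<Longrightarrow> P K n" by metis
  obtain n where nm: "strict_mono n" and nTh: "\<And>K. Th K \<le> n K" using rec_seq[of Th] by blast
  have Pn: "\<And>K. P K (n K)" using Th nTh by blast
  have nmono: "\<And>i j. i \<le> j \<Longrightarrow> n i \<le> n j" using nm strict_mono_less_eq by blast
  have nge: "\<And>K. K \<le> n K" using nm strict_mono_imp_increasing by blast
  have Mle: "\<And>K j. j < K \<Longrightarrow> M j \<le> n K" using Pn unfolding P_def by blast
  have pU: "\<And>K j. j < K \<Longrightarrow> sqrt (QQ (U j (n K))) < (1/2)^j" using p_pow M Mle UD by blast

  define w where "w K = V (n K) + (\<Sum>j<K. U j (n K))" for K
  have wD: "w K \<in> fdom t" for K
  proof -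
    have "(\<Sum>j<K. U j (n K)) \<in> fdom t" by (rule ls_sum[OF DL]) (auto simp: UD)
    thus ?thesis unfolding w_def by (rule ls_add[OF DL VD])
  qed
  have tailbound: "sqrt (QQ (\<Sum>j\<in>{K..<K'}. U j (n K'))) \<le> 2 * (1/2)^K" for K K'
  proof -
    have "sqrt (QQ (\<Sum>j\<in>{K..<K'}. U j (n K'))) \<le> (\<Sum>j\<in>{K..<K'}. sqrt (QQ (U j (n K'))))"
      by (rule q_sum[OF tS[OF F Pt] tP[OF F Pt]]) (auto simp: UD)
    also have "\<dots> \<le> (\<Sum>j\<in>{K..<K'}. (1/2)^j)" using pU by (intro sum_mono) (auto intro: less_imp_le)
    also have "\<dots> \<le> 2 * (1/2)^K" by (rule geom_bound)
    finally show ?thesis .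
  qed
  have wbound: "sqrt (QQ (w K' - w K)) \<le> 4 * (1/2)^K" if KK: "K \<le> K'" for K K'
  proof -
    have split: "(\<Sum>j<K'. U j (n K')) = (\<Sum>j<K. U j (n K')) + (\<Sum>j\<in>{K..<K'}. U j (n K'))"
      using sum.atLeastLessThan_concat[of 0 K K' "\<lambda>j. U j (n K')"] KK by (simp add: atLeast0LessThan)
    let ?A = "V (n K') - V (n K)" and ?B = "\<Sum>j<K. U j (n K') - U j (n K)"
      and ?C = "\<Sum>j\<in>{K..<K'}. U j (n K')"
    have eq: "w K' - w K = ?A + ?B + ?C" unfolding w_def split by (simp add: sum_subtractf algebra_simps)
    have AD: "?A \<in> fdom t" using ls_diff[OF DL] VD by blast
    have BD: "?B \<in> fdom t" by (rule ls_sum[OF DL]) (auto intro: ls_diff[OF DL] simp: UD)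
    have CD: "?C \<in> fdom t" by (rule ls_sum[OF DL]) (auto simp: UD)
    have "sqrt (QQ (?A + ?B + ?C)) \<le> sqrt (QQ (?A + ?B)) + sqrt (QQ ?C)"
      by (rule q_tri[OF tS[OF F Pt] tP[OF F Pt] ls_add[OF DL AD BD] CD])
    also have "sqrt (QQ (?A + ?B)) \<le> sqrt (QQ ?A) + sqrt (QQ ?B)"
      by (rule q_tri[OF tS[OF F Pt] tP[OF F Pt] AD BD])
    also have "sqrt (QQ ?A) < (1/2)^K" using Pn[of K] nmono[OF KK] unfolding P_def by blast
    also have "sqrt (QQ ?B) \<le> (1/2)^K"
    proof -
      have "sqrt (QQ ?B) \<le> (\<Sum>j<K. sqrt (QQ (U j (n K') - U j (n K))))"
        by (rule q_sum[OF tS[OF F Pt] tP[OF F Pt]]) (auto intro: ls_diff[OF DL] simp: UD)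
      also have "\<dots> \<le> (\<Sum>j<K. c K)"
        using Pn[of K] nmono[OF KK] unfolding P_def by (intro sum_mono) (auto intro: less_imp_le)
      also have "\<dots> = real K * c K" by simp
      also have "\<dots> = (1/2)^K * (real K / (real K + 1))" unfolding c_def by simp
      also have "\<dots> \<le> (1/2)^K * 1" by (intro mult_left_mono) auto
      also have "\<dots> = (1/2)^K" by simp
      finally show ?thesis .
    qed
    also have "sqrt (QQ ?C) \<le> 2 * (1/2)^K" by (rule tailbound)
    finally show ?thesis unfolding eq by simp
  qed
  have wtc: "tcauchy t w"
    unfolding tcauchy_def
  proof (intro conjI allI impI)
    show "w k \<in> fdom t" for k by (rule wD)
    fix e :: real assume e: "e > 0"
    obtain K0 where K0: "(1/2::real)^K0 < e / 4" using real_arch_pow_inv[of "e/4" "1/2"] e by auto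
    show "\<exists>N. \<forall>m\<ge>N. \<forall>k\<ge>N. sqrt (QQ (w m - w k)) < e"
    proof (intro exI allI impI)
      fix m k assume mk: "K0 \<le> m" "K0 \<le> k"
      have pd: "(1/2::real)^m \<le> (1/2)^K0" "(1/2::real)^k \<le> (1/2)^K0"
        using mk by (auto intro: power_decreasing)
      show "sqrt (QQ (w m - w k)) < e"
      proof (cases "k \<le> m")
        case True thus ?thesis using wbound[OF True] pd K0 by linarith
      next
        case False
        hence "sqrt (QQ (w k - w m)) \<le> 4 * (1/2)^m" using wbound by simp
        moreover have "QQ (w m - w k) = QQ (w k - w m)" using q_commdiff[OF tS[OF F Pt] tP[OF F Pt]] wD by blast
        ultimately have "sqrt (QQ (w m - w k)) \<le> 4 * (1/2)^m" by simp
        thus ?thesis using pd K0 by linarith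
      qed
    qed
  qed
  have \<eta>sum: "\<eta> K = \<eta> 0 + (\<Sum>j<K. d j)" for K
    by (induction K) (simp_all add: d_def algebra_simps)
  have wclose: "nrm (w K - \<eta> K) \<le> (1/2)^K" for K
  proof -
    have eq: "w K - \<eta> K = (V (n K) - \<eta> 0) + (\<Sum>j<K. U j (n K) - d j)"
      unfolding w_def \<eta>sum[of K] by (simp add: sum_subtractf algebra_simps)
    have "nrm (w K - \<eta> K) \<le> nrm (V (n K) - \<eta> 0) + nrm (\<Sum>j<K. U j (n K) - d j)"
      unfolding eq by (rule hn_tri)
    also have "nrm (\<Sum>j<K. U j (n K) - d j) \<le> (\<Sum>j<K. nrm (U j (n K) - d j))" by (rule hn_sum) simp
    also have "\<dots> \<le> (\<Sum>j<K. c K)" using Pn[of K] unfolding P_def by (intro sum_mono) (auto intro: less_imp_le)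
    also have "nrm (V (n K) - \<eta> 0) \<le> c K" using Pn[of K] unfolding P_def by auto
    finally have "nrm (w K - \<eta> K) \<le> (real K + 1) * c K" by (simp add: algebra_simps)
    also have "\<dots> = (1/2)^K" unfolding c_def by simp
    finally show ?thesis .
  qed
  have wcv: "conv w x"
    unfolding conv_def
  proof (rule null_sandwich[where f="\<lambda>K. (1/2)^K + nrm (\<eta> K - x)"])
    show "(\<lambda>K. (1/2::real)^K + nrm (\<eta> K - x)) \<longlonglongrightarrow> 0"
      using LIMSEQ_power_zero[of "1/2::real"] c\<eta>[unfolded conv_def] tendsto_add by fastforce
    show "0 \<le> nrm (w K - x)" for K by (rule hn_nonneg)
    show "nrm (w K - x) \<le> (1/2)^K + nrm (\<eta> K - x)" for K
      using hn_tri_diff[of "w K" x "\<eta> K"] wclose[of K] by linarith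
  qed
  have admw: "adm t x w" unfolding adm_def using wtc wcv by blast
  hence xD: "x \<in> Dh t" unfolding Dh_def by blast

  have ghJ: "gh t (x - \<eta> J) \<le> 4 * (1/4)^J" for J
  proof -
    define Y where "Y K = V (n K) + (\<Sum>j<J. U j (n K))" for K
    have Ytc: "tcauchy t Y" unfolding Y_def
      using tc_add[OF F Pt tc_subseq[OF F Pt Vtc nge] tc_sum[of "{..<J}" "\<lambda>j K. U j (n K)"]]
        tc_subseq[OF F Pt Utc nge] by auto
    have Ycv: "conv Y (\<eta> J)" unfolding Y_def \<eta>sum[of J]
      using conv_add[OF conv_subseq[OF Vcv nm] conv_sum[of "{..<J}" "\<lambda>j K. U j (n K)" d]]
        conv_subseq[OF Ucv nm] by auto
    have adm1: "adm t (x - \<eta> J) (\<lambda>K. w K - Y K)"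
      using adm_diff[OF F Pt admw] Ytc Ycv unfolding adm_def by blast
    have "tl t (\<lambda>K. w K - Y K) \<le> (2 * (1/2)^J)^2"
    proof (rule tl_le[OF F Pt, of _ J])
      show "tcauchy t (\<lambda>K. w K - Y K)" using adm1 unfolding adm_def by blast
      show "\<forall>K\<ge>J. QQ (w K - Y K) \<le> (2 * (1/2)^J)^2"
      proof (intro allI impI)
        fix K assume JK: "J \<le> K"
        have split: "(\<Sum>j<K. U j (n K)) = (\<Sum>j<J. U j (n K)) + (\<Sum>j\<in>{J..<K}. U j (n K))"
          using sum.atLeastLessThan_concat[of 0 J K "\<lambda>j. U j (n K)"] JK by (simp add: atLeast0LessThan)
        have "w K - Y K = (\<Sum>j\<in>{J..<K}. U j (n K))" unfolding w_def Y_def split by simp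
        hence "sqrt (QQ (w K - Y K)) \<le> 2 * (1/2)^J" using tailbound by simp
        moreover have "0 \<le> QQ (w K - Y K)"
          using Q_nonneg[OF F Pt] wD ls_diff[OF DL] tc_in[OF F Pt Ytc] by blast
        ultimately show "QQ (w K - Y K) \<le> (2 * (1/2)^J)^2"
          by (metis real_sqrt_le_iff real_sqrt_pow2 sqrt_le_D)
      qed
    qed
    also have "(2 * (1/2::real)^J)^2 = 4 * (1/4)^J"
    proof -
      have "((1/2::real)^J)^2 = ((1/2) * (1/2))^J" unfolding power2_eq_square power_mult_distrib ..
      thus ?thesis by (simp add: power_mult_distrib)
    qed
    finally show ?thesis using gh_le[OF F Pt adm1] by linarith
  qed

  have "(\<lambda>k. gh t (\<xi> k - x)) \<longlonglongrightarrow> 0"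
    unfolding LIMSEQ_iff
  proof (intro allI impI)
    fix r :: real assume r: "r > 0"
    obtain J where J: "(1/4::real)^J < r / 10" using real_arch_pow_inv[of "r/10" "1/4"] r by auto
    show "\<exists>no. \<forall>k\<ge>no. norm (gh t (\<xi> k - x) - 0) < r"
    proof (intro exI allI impI)
      fix k assume k: "N J \<le> k"
      have a: "\<xi> k - \<eta> J \<in> Dh t" "\<eta> J - x \<in> Dh t" using ls_diff[OF DhL] xi \<eta>D xD by blast+
      have "gh t (\<xi> k - x) = gh t ((\<xi> k - \<eta> J) + (\<eta> J - x))" by simp
      also have "\<dots> \<le> 2 * gh t (\<xi> k - \<eta> J) + 2 * gh t (\<eta> J - x)" using gh_2 a by blast
      also have "gh t (\<xi> k - \<eta> J) < (1/4)^J"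
        unfolding \<eta>_def using N0 NN0[of J] k by (meson order_trans)
      also have "gh t (\<eta> J - x) = gh t (x - \<eta> J)" using gh_commdiff \<eta>D xD by blast
      also have "\<dots> \<le> 4 * (1/4)^J" by (rule ghJ)
      finally have "gh t (\<xi> k - x) < 10 * (1/4)^J" by simp
      moreover have "0 \<le> gh t (\<xi> k - x)" using gh_nonneg[OF F Pt] ls_diff[OF DhL] xi xD by blast
      ultimately show "norm (gh t (\<xi> k - x) - 0) < r" using J by simp
    qed
  qed
  thus ?thesis using xD by blast
qed

end
end


context hs begin

lemma form_eqI:
  assumes a: "is_form sc ip a" and b: "is_form sc ip b" and d: "fdom a = fdom b"
    and diag: "\<And>x. x \<in> fdom a \<Longrightarrow> fval a x x = fval b x x"
  shows "a = b"
proof -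
  have Sa: "sesq (fdom a) (fval a)" using form_sesq[OF a] .
  have Sb: "sesq (fdom a) (fval b)" using form_sesq[OF b] d by simp
  have "fval a x y = fval b x y" for x y
  proof (cases "x \<in> fdom a \<and> y \<in> fdom a")
    case True thus ?thesis using sesq_diag_eq[OF Sa Sb diag] by blast
  next
    case False thus ?thesis using a b d unfolding is_form_def by auto
  qed
  hence "fval a = fval b" by blast
  thus ?thesis using d unfolding fdom_def fval_def by (simp add: prod_eq_iff)
qed

lemma re_im_eq: "Im z = 0 \<Longrightarrow> Im w = 0 \<Longrightarrow> Re z = Re w \<Longrightarrow> z = w"
  by (simp add: complex_eq_iff)

definition mkform :: "'a set \<Rightarrow> ('a \<Rightarrow> 'a \<Rightarrow> complex) \<Rightarrow> 'a form" where
  "mkform S f = (S, \<lambda>x y. if x \<in> S \<and> y \<in> S then f x y else 0)"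

lemma mk_fdom[simp]: "fdom (mkform S f) = S" unfolding mkform_def fdom_def by simp
lemma mk_fval: "fval (mkform S f) x y = (if x \<in> S \<and> y \<in> S then f x y else 0)"
  unfolding mkform_def fval_def by simp

lemma sesq_mono: "sesq S' f \<Longrightarrow> lin_subspace sc S \<Longrightarrow> S \<subseteq> S' \<Longrightarrow> sesq S f"
  unfolding sesq_def by blast

lemma mk_is_form: assumes S: "sesq S f" and d: "dense_in ip S" shows "is_form sc ip (mkform S f)"
  unfolding is_form_def mk_fdom mk_fval using S d S_ls[OF S] ls_add[OF S_ls[OF S]] ls_sc[OF S_ls[OF S]]
  unfolding sesq_def by auto

lemma dense_mono: "dense_in ip S \<Longrightarrow> S \<subseteq> S' \<Longrightarrow> dense_in ip S'"
  unfolding dense_in_def by blast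

lemma unit_in: assumes nz: "\<exists>v::'a. v \<noteq> 0" and d: "dense_in ip S" and ls: "lin_subspace sc S"
  shows "\<exists>u\<in>S. nrm u = 1"
proof -
  obtain v :: 'a where v: "v \<noteq> 0" using nz by blast
  have "nrm v \<noteq> 0" using hn_eq0 v by blast
  hence vp: "nrm v > 0" using hn_nonneg[of v] by linarith
  then obtain y where y: "y \<in> S" "nrm (v - y) < nrm v" using d unfolding dense_in_def by blast
  have "y \<noteq> 0" using y by auto
  hence yp: "nrm y > 0" using hn_eq0 hn_nonneg[of y] by (metis less_eq_real_def)
  let ?u = "sc (complex_of_real (1 / nrm y)) y"
  have "?u \<in> S" using ls_sc[OF ls y(1)] .
  moreover have "nrm ?u = 1" using yp by (simp add: hn_sc norm_divide)
  ultimately show ?thesis by blast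
qed

lemma lb_nonneg: assumes nz: "\<exists>v::'a. v \<noteq> 0" and F: "is_form sc ip s" and P: "positive_form s"
  shows "0 \<le> lower_bound ip s"
proof -
  have "\<exists>u\<in>fdom s. nrm u = 1" using unit_in[OF nz] F S_ls[OF form_sesq[OF F]] unfolding is_form_def by blast
  hence ne: "{Re (fval s x x) | x. x \<in> fdom s \<and> nrm x = 1} \<noteq> {}" by blast
  show ?thesis unfolding lower_bound_def
    by (rule cInf_greatest[OF ne]) (use P in \<open>auto simp: positive_form_def\<close>)
qed

lemma fn_sq: assumes F: "is_form sc ip s" and P: "positive_form s" and x: "x \<in> fdom s"
    and lb: "0 \<le> lower_bound ip s"
  shows "(form_norm ip s x)^2 = qf (fval s) x + (1 + lower_bound ip s) * (nrm x)^2"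
proof -
  have "0 \<le> qf (fval s) x" using Q_nonneg[OF F P x] .
  thus ?thesis unfolding form_norm_def qf_def using lb by simp
qed



lemma fn_bounds: assumes F: "is_form sc ip s" and P: "positive_form s" and x: "x \<in> fdom s"
    and lb: "0 \<le> lower_bound ip s"
  shows "qf (fval s) x \<le> (form_norm ip s x)^2" "nrm x \<le> form_norm ip s x" "0 \<le> form_norm ip s x"
proof -
  have q0: "0 \<le> qf (fval s) x" using Q_nonneg[OF F P x] .
  have n0: "0 \<le> (nrm x)^2" by simp
  have e: "(form_norm ip s x)^2 = qf (fval s) x + (1 + lower_bound ip s) * (nrm x)^2"
    using fn_sq[OF F P x lb] .
  have "(1 + lower_bound ip s) * (nrm x)^2 \<ge> (nrm x)^2" using lb n0
    by (metis add.commute le_add_same_cancel2 mult_le_cancel_right1 mult_nonneg_nonneg distrib_right mult_1 )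
  hence a: "(nrm x)^2 \<le> (form_norm ip s x)^2" using e q0 by linarith
  show "qf (fval s) x \<le> (form_norm ip s x)^2" using e q0 lb n0 by simp
  show f0: "0 \<le> form_norm ip s x" unfolding form_norm_def using q0 lb n0
    by (simp add: qf_def)
  show "nrm x \<le> form_norm ip s x" using a f0 by (rule power2_le_imp_le)
qed

lemma closed_from_q:
  assumes nz: "\<exists>v::'a. v \<noteq> 0" and F: "is_form sc ip s" and P: "positive_form s"
    and qc: "\<And>X. (\<forall>k. X k \<in> fdom s) \<Longrightarrow> (\<forall>e>0. \<exists>N. \<forall>m\<ge>N. \<forall>k\<ge>N. qf (fval s) (X m - X k) < e)
       \<Longrightarrow> hcauchy X \<Longrightarrow> \<exists>L\<in>fdom s. conv X L \<and> (\<lambda>k. qf (fval s) (X k - L)) \<longlonglongrightarrow> 0"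
  shows "closed_form sc ip s"
  unfolding closed_form_def
proof (intro conjI F P allI impI)
  have lb: "0 \<le> lower_bound ip s" using lb_nonneg[OF nz F P] .
  have DL: "lin_subspace sc (fdom s)" using S_ls[OF form_sesq[OF F]] .
  fix X :: "nat \<Rightarrow> 'a" assume A: "(\<forall>k. X k \<in> fdom s) \<and> (\<forall>e>0. \<exists>N. \<forall>m\<ge>N. \<forall>k\<ge>N. form_norm ip s (X m - X k) < e)"
  hence XD: "\<And>k. X k \<in> fdom s" by blast
  have dD: "\<And>m k. X m - X k \<in> fdom s" using ls_diff[OF DL] XD by blast
  have qC: "\<forall>e>0. \<exists>N. \<forall>m\<ge>N. \<forall>k\<ge>N. qf (fval s) (X m - X k) < e"
  proof (intro allI impI)
    fix e :: real assume e: "e > 0"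
    have "sqrt e > 0" using e by simp
    then obtain N where N: "\<forall>m\<ge>N. \<forall>k\<ge>N. form_norm ip s (X m - X k) < sqrt e" using A by blast
    show "\<exists>N. \<forall>m\<ge>N. \<forall>k\<ge>N. qf (fval s) (X m - X k) < e"
    proof (intro exI allI impI)
      fix m k assume "N \<le> m" "N \<le> k"
      hence "form_norm ip s (X m - X k) < sqrt e" using N by blast
      hence "(form_norm ip s (X m - X k))^2 < (sqrt e)^2"
        using fn_bounds(3)[OF F P dD lb] by (intro power_strict_mono) auto
      thus "qf (fval s) (X m - X k) < e" using fn_bounds(1)[OF F P dD lb, of m k] e by simp
    qed
  qed
  have hC: "hcauchy X" unfolding hcauchy_def
  proof (intro allI impI)
    fix e :: real assume e: "e > 0"
    then obtain N where N: "\<forall>m\<ge>N. \<forall>k\<ge>N. form_norm ip s (X m - X k) < e" using A by auto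
    show "\<exists>N. \<forall>m\<ge>N. \<forall>k\<ge>N. nrm (X m - X k) < e"
      using N fn_bounds(2)[OF F P dD lb] by (meson le_less_trans)
  qed
  obtain L where L: "L \<in> fdom s" "conv X L" "(\<lambda>k. qf (fval s) (X k - L)) \<longlonglongrightarrow> 0"
    using qc[OF _ qC hC] XD by blast
  have "(\<lambda>k. sqrt (qf (fval s) (X k - L) + (1 + lower_bound ip s) * (nrm (X k - L))^2)) \<longlonglongrightarrow>
      sqrt (0 + (1 + lower_bound ip s) * 0^2)"
    using L(2,3) unfolding conv_def by (intro tendsto_real_sqrt tendsto_add tendsto_mult tendsto_power tendsto_const)
  hence "(\<lambda>k. form_norm ip s (X k - L)) \<longlonglongrightarrow> 0" unfolding form_norm_def qf_def by simp
  thus "\<exists>L\<in>fdom s. (\<lambda>k. form_norm ip s (X k - L)) \<longlonglongrightarrow> 0" using L(1) by blast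
qed

lemma closed_to_q:
  assumes nz: "\<exists>v::'a. v \<noteq> 0" and C: "closed_form sc ip s"
    and XD: "\<And>k. X k \<in> fdom s"
    and qC: "\<And>e. e > 0 \<Longrightarrow> \<exists>N. \<forall>m\<ge>N. \<forall>k\<ge>N. qf (fval s) (X m - X k) < e"
    and hC: "hcauchy X"
  shows "\<exists>L\<in>fdom s. conv X L \<and> (\<lambda>k. qf (fval s) (X k - L)) \<longlonglongrightarrow> 0"
proof -
  have F: "is_form sc ip s" and P: "positive_form s" using C unfolding closed_form_def by auto
  have lb: "0 \<le> lower_bound ip s" using lb_nonneg[OF nz F P] .
  have DL: "lin_subspace sc (fdom s)" using S_ls[OF form_sesq[OF F]] .
  have dD: "\<And>m k. X m - X k \<in> fdom s" using ls_diff[OF DL] XD by blast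
  let ?c = "1 + lower_bound ip s"
  have c1: "1 \<le> ?c" using lb by simp
  have fC: "\<forall>e>0. \<exists>N. \<forall>m\<ge>N. \<forall>k\<ge>N. form_norm ip s (X m - X k) < e"
  proof (intro allI impI)
    fix e :: real assume e: "e > 0"
    obtain N1 where N1: "\<forall>m\<ge>N1. \<forall>k\<ge>N1. qf (fval s) (X m - X k) < e^2 / 4" using qC[of "e^2/4"] e by auto
    have "e / (2 * ?c) > 0" using e c1 by simp
    then obtain N2 where N2: "\<forall>m\<ge>N2. \<forall>k\<ge>N2. nrm (X m - X k) < e / (2 * ?c)"
      using hC unfolding hcauchy_def by blast
    show "\<exists>N. \<forall>m\<ge>N. \<forall>k\<ge>N. form_norm ip s (X m - X k) < e"
    proof (intro exI allI impI)
      fix m k assume mk: "max N1 N2 \<le> m" "max N1 N2 \<le> k"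
      have q: "qf (fval s) (X m - X k) < e^2 / 4" using N1 mk by auto
      have n: "nrm (X m - X k) < e / (2 * ?c)" using N2 mk by auto
      have "(nrm (X m - X k))^2 \<le> (e / (2 * ?c))^2"
        using n hn_nonneg by (intro power_mono) (auto intro: less_imp_le)
      hence "?c * (nrm (X m - X k))^2 \<le> ?c * (e / (2 * ?c))^2" using c1 by (intro mult_left_mono) auto
      also have "?c * (e / (2 * ?c))^2 = e^2 / (4 * ?c)"
      proof -
        have gen: "\<And>c e::real. c \<noteq> 0 \<Longrightarrow> c * (e / (2 * c))^2 = e^2 / (4 * c)"
          by (simp add: power2_eq_square field_simps)
        show ?thesis by (rule gen) (use c1 in simp)
      qed
      also have "\<dots> \<le> e^2 / 4" using c1 e by (intro divide_left_mono) auto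
      finally have cb: "?c * (nrm (X m - X k))^2 \<le> e^2 / 4" .
      have "(form_norm ip s (X m - X k))^2 < e^2"
        using fn_sq[OF F P dD lb, of m k] q cb zero_le_power2[of e] by linarith
      thus "form_norm ip s (X m - X k) < e" using e by (meson less_imp_le power_less_imp_less_base)
    qed
  qed
  obtain L where L: "L \<in> fdom s" "(\<lambda>k. form_norm ip s (X k - L)) \<longlonglongrightarrow> 0"
    using C XD fC unfolding closed_form_def by blast
  have dL: "\<And>k. X k - L \<in> fdom s" using ls_diff[OF DL] XD L(1) by blast
  have "(\<lambda>k. nrm (X k - L)) \<longlonglongrightarrow> 0"
    using L(2) by (rule null_sandwich) (auto intro: hn_nonneg fn_bounds(2)[OF F P dL lb])
  moreover have "(\<lambda>k. qf (fval s) (X k - L)) \<longlonglongrightarrow> 0"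
  proof (rule null_sandwich)
    show "(\<lambda>k. (form_norm ip s (X k - L))^2) \<longlonglongrightarrow> 0" using tendsto_power[OF L(2), of 2] by simp
  qed (auto intro: Q_nonneg[OF F P dL] fn_bounds(1)[OF F P dL lb])
  ultimately show ?thesis using L(1) unfolding conv_def by blast
qed

end


context hs begin

definition ghat :: "'a form \<Rightarrow> 'a form" where "ghat t = mkform (Dh t) (Bf (gh t))"
definition treg :: "'a form \<Rightarrow> 'a form" where "treg t = mkform (fdom t) (Bf (gh t))"

context
  fixes t assumes nz: "\<exists>v::'a. v \<noteq> 0" and F: "is_form sc ip t" and Pt: "positive_form t"
begin

lemma BS: "sesq (Dh t) (Bf (gh t))"
  by (rule Bf_sesq[OF Dh_ls[OF F Pt] gh_nonneg[OF F Pt] gh_para[OF F Pt] gh_hom[OF F Pt]])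
lemma BXX: "x \<in> Dh t \<Longrightarrow> Bf (gh t) x x = of_real (gh t x)"
  by (rule Bf_xx[OF Dh_ls[OF F Pt] gh_nonneg[OF F Pt] gh_para[OF F Pt] gh_hom[OF F Pt]])
lemma dense_t: "dense_in ip (fdom t)" using F unfolding is_form_def by blast
lemma dense_Dh: "dense_in ip (Dh t)" using dense_mono[OF dense_t D_Dh[OF F Pt]] .

lemma ghat_form: "is_form sc ip (ghat t)" unfolding ghat_def by (rule mk_is_form[OF BS dense_Dh])
lemma ghat_pos: "positive_form (ghat t)"
  unfolding positive_form_def ghat_def mk_fdom mk_fval using BXX gh_nonneg[OF F Pt] by simp
lemma ghat_q: "x \<in> Dh t \<Longrightarrow> qf (fval (ghat t)) x = gh t x"
  unfolding qf_def ghat_def mk_fval using BXX by simp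

lemma ghat_closed: "closed_form sc ip (ghat t)"
proof (rule closed_from_q[OF nz ghat_form ghat_pos])
  fix X :: "nat \<Rightarrow> 'a"
  assume XD: "\<forall>k. X k \<in> fdom (ghat t)"
    and qC: "\<forall>e>0. \<exists>N. \<forall>m\<ge>N. \<forall>k\<ge>N. qf (fval (ghat t)) (X m - X k) < e"
    and hC: "hcauchy X"
  have XD': "\<And>k. X k \<in> Dh t" using XD unfolding ghat_def by simp
  have dD: "\<And>m k. X m - X k \<in> Dh t" using ls_diff[OF Dh_ls[OF F Pt]] XD' by blast
  obtain x where cx: "conv X x" using hcauchy_conv[OF hC] by blast
  have gC: "\<And>e. e > 0 \<Longrightarrow> \<exists>N. \<forall>m\<ge>N. \<forall>k\<ge>N. gh t (X m - X k) < e"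
    using qC ghat_q[OF dD] by simp
  have r: "x \<in> Dh t \<and> (\<lambda>k. gh t (X k - x)) \<longlonglongrightarrow> 0" by (rule gh_closed[OF F Pt XD' gC cx])
  have "(\<lambda>k. qf (fval (ghat t)) (X k - x)) = (\<lambda>k. gh t (X k - x))"
    using ghat_q ls_diff[OF Dh_ls[OF F Pt]] XD' r by blast
  thus "\<exists>L\<in>fdom (ghat t). conv X L \<and> (\<lambda>k. qf (fval (ghat t)) (X k - L)) \<longlonglongrightarrow> 0"
    using r cx unfolding ghat_def by auto
qed

lemma treg_sesq: "sesq (fdom t) (Bf (gh t))"
  by (rule sesq_mono[OF BS tD[OF F Pt] D_Dh[OF F Pt]])
lemma treg_form: "is_form sc ip (treg t)" unfolding treg_def by (rule mk_is_form[OF treg_sesq dense_t])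
lemma treg_pos: "positive_form (treg t)"
  unfolding positive_form_def treg_def mk_fdom mk_fval using BXX gh_nonneg[OF F Pt] D_Dh[OF F Pt] by auto
lemma treg_q: "x \<in> fdom t \<Longrightarrow> qf (fval (treg t)) x = gh t x"
  unfolding qf_def treg_def mk_fval using BXX D_Dh[OF F Pt] by auto
lemma treg_dom[simp]: "fdom (treg t) = fdom t" unfolding treg_def by simp

lemma treg_closable: "closable_form sc ip (treg t)"
  unfolding closable_form_def
proof (intro exI conjI)
  show "closed_form sc ip (ghat t)" by (rule ghat_closed)
  show "fdom (treg t) \<subseteq> fdom (ghat t)" unfolding treg_def ghat_def using D_Dh[OF F Pt] by simp
  show "\<forall>x\<in>fdom (treg t). \<forall>y\<in>fdom (treg t). fval (ghat t) x y = fval (treg t) x y"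
    unfolding treg_def ghat_def mk_fval mk_fdom using D_Dh[OF F Pt] by auto
qed

lemma treg_cand: "reg_candidate sc ip t (treg t)"
  unfolding reg_candidate_def
  using treg_form treg_pos treg_closable treg_q gh_D[OF F Pt] unfolding qf_def by auto

lemma treg_max: assumes r: "reg_candidate sc ip t r"
  shows "\<forall>x\<in>fdom t. Re (fval r x x) \<le> Re (fval (treg t) x x)"
proof
  fix x assume x: "x \<in> fdom t"
  have rF: "is_form sc ip r" and rP: "positive_form r" and rc: "closable_form sc ip r"
    and rd: "fdom r = fdom t" and rle: "\<forall>x\<in>fdom t. Re (fval r x x) \<le> Re (fval t x x)"
    using r unfolding reg_candidate_def by auto
  obtain s where sC: "closed_form sc ip s" and sd: "fdom r \<subseteq> fdom s"
    and sv: "\<forall>x\<in>fdom r. \<forall>y\<in>fdom r. fval s x y = fval r x y"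
    using rc unfolding closable_form_def by blast
  have sF: "is_form sc ip s" and sP: "positive_form s" using sC unfolding closed_form_def by auto
  have DL: "lin_subspace sc (fdom t)" using tD[OF F Pt] .
  have SL: "lin_subspace sc (fdom s)" using S_ls[OF form_sesq[OF sF]] .
  have qsr: "\<And>y. y \<in> fdom t \<Longrightarrow> qf (fval s) y = qf (fval r) y" using sv rd unfolding qf_def by simp
  have qrt: "\<And>y. y \<in> fdom t \<Longrightarrow> qf (fval r) y \<le> qf (fval t) y" using rle unfolding qf_def by simp
  have "qf (fval r) x \<le> tl t X" if X: "adm t x X" for X
  proof -
    have Xtc: "tcauchy t X" and Xcv: "conv X x" using X unfolding adm_def by auto
    have XD: "\<And>k. X k \<in> fdom t" using tc_in[OF F Pt Xtc] .
    have XsD: "\<And>k. X k \<in> fdom s" using XD rd sd by blast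
    have dD: "\<And>m k. X m - X k \<in> fdom t" using ls_diff[OF DL] XD by blast
    have qC: "\<exists>N. \<forall>m\<ge>N. \<forall>k\<ge>N. qf (fval s) (X m - X k) < e" if e: "e > 0" for e
    proof -
      have "sqrt e > 0" using e by simp
      then obtain N where N: "\<forall>m\<ge>N. \<forall>k\<ge>N. sqrt (qf (fval t) (X m - X k)) < sqrt e"
        using Xtc unfolding tcauchy_def by blast
      show ?thesis
      proof (intro exI allI impI)
        fix m k assume "N \<le> m" "N \<le> k"
        hence "qf (fval t) (X m - X k) < e" using N by simp
        thus "qf (fval s) (X m - X k) < e" using qsr[OF dD] qrt[OF dD] by (metis le_less_trans)
      qed
    qed
    obtain L where L: "L \<in> fdom s" "conv X L" "(\<lambda>k. qf (fval s) (X k - L)) \<longlonglongrightarrow> 0"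
      using closed_to_q[OF nz sC XsD qC conv_hcauchy[OF Xcv]] by blast
    have Lx: "L = x" using conv_unique[OF L(2) Xcv] .
    have xs: "x \<in> fdom s" using x rd sd by blast
    have "(\<lambda>k. sqrt (qf (fval s) (X k))) \<longlonglongrightarrow> sqrt (qf (fval s) x)"
    proof -
      have "(\<lambda>k. sqrt (qf (fval s) (X k)) - sqrt (qf (fval s) x)) \<longlonglongrightarrow> 0"
      proof (rule tendsto_rabs_zero_cancel, rule null_sandwich)
        show "(\<lambda>k. sqrt (qf (fval s) (X k - x))) \<longlonglongrightarrow> 0"
          using tendsto_real_sqrt[OF L(3)] Lx by simp
        show "\<bar>sqrt (qf (fval s) (X k)) - sqrt (qf (fval s) x)\<bar> \<le> sqrt (qf (fval s) (X k - x))" for k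
          by (rule q_tri_diff[OF form_sesq[OF sF] form_psd[OF sP] XsD xs])
      qed auto
      thus ?thesis by (simp add: LIM_zero_cancel)
    qed
    hence "(\<lambda>k. (sqrt (qf (fval s) (X k)))^2) \<longlonglongrightarrow> (sqrt (qf (fval s) x))^2" by (rule tendsto_power)
    hence lim1: "(\<lambda>k. qf (fval s) (X k)) \<longlonglongrightarrow> qf (fval s) x"
      using Q_nonneg[OF sF sP] XsD xs by simp
    have "qf (fval s) x \<le> tl t X"
    proof (rule LIMSEQ_le[OF lim1 tc_lim(1)[OF F Pt Xtc]])
      show "\<exists>N. \<forall>n\<ge>N. qf (fval s) (X n) \<le> qf (fval t) (X n)" using qsr qrt XD by auto
    qed
    thus ?thesis using qsr[OF x] by simp
  qed
  hence "qf (fval r) x \<le> gh t x"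
    unfolding gh_def
    by (intro cInf_greatest) (use x D_Dh[OF F Pt] in \<open>auto simp: Dh_def\<close>)
  thus "Re (fval r x x) \<le> Re (fval (treg t) x x)" using treg_q[OF x] unfolding qf_def by simp
qed

lemma regular_part_eq: "regular_part sc ip t = treg t"
  unfolding regular_part_def
proof (rule the_equality)
  show "reg_candidate sc ip t (treg t) \<and> (\<forall>r'. reg_candidate sc ip t r' \<longrightarrow>
      (\<forall>x\<in>fdom t. Re (fval r' x x) \<le> Re (fval (treg t) x x)))"
    using treg_cand treg_max by blast
  fix r assume A: "reg_candidate sc ip t r \<and> (\<forall>r'. reg_candidate sc ip t r' \<longrightarrow>
      (\<forall>x\<in>fdom t. Re (fval r' x x) \<le> Re (fval r x x)))"
  have rc: "reg_candidate sc ip t r" using A by blast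
  have rF: "is_form sc ip r" and rP: "positive_form r" and rd: "fdom r = fdom t"
    using rc unfolding reg_candidate_def by auto
  have le1: "\<forall>x\<in>fdom t. Re (fval (treg t) x x) \<le> Re (fval r x x)" using A treg_cand by blast
  have le2: "\<forall>x\<in>fdom t. Re (fval r x x) \<le> Re (fval (treg t) x x)" using treg_max[OF rc] .
  show "r = treg t"
  proof (rule form_eqI[OF rF treg_form])
    show "fdom r = fdom (treg t)" using rd by simp
    fix x assume x: "x \<in> fdom r"
    have "Im (fval r x x) = 0" using rP x unfolding positive_form_def by blast
    moreover have "Im (fval (treg t) x x) = 0" using treg_pos x rd unfolding positive_form_def by simp
    moreover have "Re (fval r x x) = Re (fval (treg t) x x)" using le1 le2 x rd by (metis antisym)
    ultimately show "fval r x x = fval (treg t) x x" by (rule re_im_eq)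
  qed
qed

lemma rp_cand: "reg_candidate sc ip t (regular_part sc ip t)"
  using treg_cand regular_part_eq by simp
lemma rp_max: "reg_candidate sc ip t r \<Longrightarrow> \<forall>x\<in>fdom t. Re (fval r x x) \<le> Re (fval (regular_part sc ip t) x x)"
  using treg_max regular_part_eq by simp

end
end


context hs begin

lemma fa_mk: "form_add a b = mkform (fdom a \<inter> fdom b) (\<lambda>x y. fval a x y + fval b x y)"
  unfolding form_add_def mkform_def by simp
lemma fa_dom[simp]: "fdom (form_add a b) = fdom a \<inter> fdom b" unfolding form_add_def fdom_def by simp
lemma fa_val: "fval (form_add a b) x y = (if x \<in> fdom a \<inter> fdom b \<and> y \<in> fdom a \<inter> fdom b then fval a x y + fval b x y else 0)"
  unfolding form_add_def fval_def fdom_def by auto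
lemma fa_q: "z \<in> fdom a \<Longrightarrow> z \<in> fdom b \<Longrightarrow> qf (fval (form_add a b)) z = qf (fval a) z + qf (fval b) z"
  unfolding qf_def fa_val by simp

lemma ls_inter: "lin_subspace sc A \<Longrightarrow> lin_subspace sc B \<Longrightarrow> lin_subspace sc (A \<inter> B)"
  unfolding lin_subspace_def by blast

lemma sesq_add: "sesq S f \<Longrightarrow> sesq S g \<Longrightarrow> sesq S (\<lambda>x y. f x y + g x y)"
  unfolding sesq_def by (simp add: algebra_simps)

lemma form_ls: "is_form sc ip a \<Longrightarrow> lin_subspace sc (fdom a)" using S_ls[OF form_sesq] .

lemma add_form: assumes a: "is_form sc ip a" and b: "is_form sc ip b" and d: "dense_in ip (fdom a \<inter> fdom b)"
  shows "is_form sc ip (form_add a b)"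
proof -
  have L: "lin_subspace sc (fdom a \<inter> fdom b)" using ls_inter form_ls a b by blast
  have "sesq (fdom a \<inter> fdom b) (\<lambda>x y. fval a x y + fval b x y)"
    using sesq_add sesq_mono[OF form_sesq[OF a] L] sesq_mono[OF form_sesq[OF b] L] by blast
  thus ?thesis unfolding fa_mk by (rule mk_is_form[OF _ d])
qed

lemma add_pos: "positive_form a \<Longrightarrow> positive_form b \<Longrightarrow> positive_form (form_add a b)"
  unfolding positive_form_def fa_val by auto

lemma fa_comm: "form_add a b = form_add b a"
  unfolding form_add_def by (auto simp: add.commute fun_eq_iff)

lemma fa_assoc: "form_add (form_add a b) c = form_add a (form_add b c)"
  unfolding form_add_def fdom_def fval_def by (auto simp: add.assoc fun_eq_iff)

lemma dense_UNIV: "dense_in ip UNIV"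
  unfolding dense_in_def by (metis diff_self hn_0 UNIV_I)
lemma zero_is_form: "is_form sc ip zero_form"
  using dense_UNIV unfolding is_form_def zero_form_def fdom_def fval_def lin_subspace_def
  by auto
lemma zero_pos: "positive_form zero_form"
  unfolding positive_form_def zero_form_def fval_def by simp
lemma zero_bnd: "bounded_form ip zero_form"
  unfolding bounded_form_def zero_form_def fval_def by (auto intro: bdd_aboveI[of _ 0])
lemma zero_dom[simp]: "fdom zero_form = UNIV" unfolding zero_form_def fdom_def by simp
lemma zero_val[simp]: "fval zero_form x y = 0" unfolding zero_form_def fval_def by simp
lemma zero_Vf: "zero_form \<in> Vf sc ip" unfolding Vf_def using zero_is_form zero_pos by simp

lemma fa_zero: "is_form sc ip a \<Longrightarrow> form_add a zero_form = a"
  unfolding form_add_def fdom_def fval_def zero_form_def is_form_def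
  by (cases a) (auto simp: fun_eq_iff)

lemma closed_add: assumes nz: "\<exists>v::'a. v \<noteq> 0" and a: "closed_form sc ip a" and b: "closed_form sc ip b"
    and d: "dense_in ip (fdom a \<inter> fdom b)"
  shows "closed_form sc ip (form_add a b)"
proof -
  have aF: "is_form sc ip a" and aP: "positive_form a" and bF: "is_form sc ip b" and bP: "positive_form b"
    using a b unfolding closed_form_def by auto
  show ?thesis
  proof (rule closed_from_q[OF nz add_form[OF aF bF d] add_pos[OF aP bP]])
    fix X :: "nat \<Rightarrow> 'a"
    assume XD: "\<forall>k. X k \<in> fdom (form_add a b)"
      and qC: "\<forall>e>0. \<exists>N. \<forall>m\<ge>N. \<forall>k\<ge>N. qf (fval (form_add a b)) (X m - X k) < e"
      and hC: "hcauchy X"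
    have XA: "\<And>k. X k \<in> fdom a" and XB: "\<And>k. X k \<in> fdom b" using XD by auto
    have dA: "\<And>m k. X m - X k \<in> fdom a" using ls_diff[OF form_ls[OF aF]] XA by blast
    have dB: "\<And>m k. X m - X k \<in> fdom b" using ls_diff[OF form_ls[OF bF]] XB by blast
    have qa: "\<And>m k. qf (fval a) (X m - X k) \<le> qf (fval (form_add a b)) (X m - X k)"
      using fa_q[OF dA dB] Q_nonneg[OF bF bP dB] by simp
    have qb: "\<And>m k. qf (fval b) (X m - X k) \<le> qf (fval (form_add a b)) (X m - X k)"
      using fa_q[OF dA dB] Q_nonneg[OF aF aP dA] by simp
    have qCa: "\<exists>N. \<forall>m\<ge>N. \<forall>k\<ge>N. qf (fval a) (X m - X k) < e" if "e > 0" for e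
      using qC that qa by (meson le_less_trans)
    have qCb: "\<exists>N. \<forall>m\<ge>N. \<forall>k\<ge>N. qf (fval b) (X m - X k) < e" if "e > 0" for e
      using qC that qb by (meson le_less_trans)
    obtain La where La: "La \<in> fdom a" "conv X La" "(\<lambda>k. qf (fval a) (X k - La)) \<longlonglongrightarrow> 0"
      using closed_to_q[OF nz a XA qCa hC] by blast
    obtain Lb where Lb: "Lb \<in> fdom b" "conv X Lb" "(\<lambda>k. qf (fval b) (X k - Lb)) \<longlonglongrightarrow> 0"
      using closed_to_q[OF nz b XB qCb hC] by blast
    have e: "La = Lb" using conv_unique[OF La(2) Lb(2)] .
    have dL: "\<And>k. X k - La \<in> fdom a" "\<And>k. X k - La \<in> fdom b"
      using ls_diff[OF form_ls[OF aF]] ls_diff[OF form_ls[OF bF]] XA XB La(1) Lb(1) e by auto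
    have "(\<lambda>k. qf (fval (form_add a b)) (X k - La)) = (\<lambda>k. qf (fval a) (X k - La) + qf (fval b) (X k - La))"
      using fa_q dL by blast
    moreover have "(\<lambda>k. qf (fval a) (X k - La) + qf (fval b) (X k - La)) \<longlonglongrightarrow> 0"
      using tendsto_add[OF La(3) Lb(3)[folded e]] by simp
    ultimately show "\<exists>L\<in>fdom (form_add a b). conv X L \<and> (\<lambda>k. qf (fval (form_add a b)) (X k - L)) \<longlonglongrightarrow> 0"
      using La(1,2) Lb(1) e by auto
  qed
qed

lemma closable_add: assumes nz: "\<exists>v::'a. v \<noteq> 0" and a: "closable_form sc ip a" and b: "closable_form sc ip b"
    and d: "dense_in ip (fdom a \<inter> fdom b)"
  shows "closable_form sc ip (form_add a b)"
proof -
  obtain ca where ca: "closed_form sc ip ca" "fdom a \<subseteq> fdom ca" "\<forall>x\<in>fdom a. \<forall>y\<in>fdom a. fval ca x y = fval a x y"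
    using a unfolding closable_form_def by blast
  obtain cb where cb: "closed_form sc ip cb" "fdom b \<subseteq> fdom cb" "\<forall>x\<in>fdom b. \<forall>y\<in>fdom b. fval cb x y = fval b x y"
    using b unfolding closable_form_def by blast
  have "dense_in ip (fdom ca \<inter> fdom cb)" using dense_mono[OF d] ca(2) cb(2) by blast
  hence C: "closed_form sc ip (form_add ca cb)" using closed_add[OF nz ca(1) cb(1)] by blast
  show ?thesis unfolding closable_form_def
  proof (intro exI conjI)
    show "closed_form sc ip (form_add ca cb)" by (rule C)
    show "fdom (form_add a b) \<subseteq> fdom (form_add ca cb)" using ca(2) cb(2) by auto
    show "\<forall>x\<in>fdom (form_add a b). \<forall>y\<in>fdom (form_add a b). fval (form_add ca cb) x y = fval (form_add a b) x y"
      using ca cb by (auto simp: fa_val)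
  qed
qed

end


context hs begin

lemma Vf_form: "t \<in> Vf sc ip \<Longrightarrow> is_form sc ip t" unfolding Vf_def by blast
lemma Vf_pos: "t \<in> Vf sc ip \<Longrightarrow> positive_form t" unfolding Vf_def by blast
lemma Vf_bnd: "t \<in> Vf sc ip \<Longrightarrow> bounded_form ip t \<Longrightarrow> fdom t = UNIV" unfolding Vf_def by blast

lemma bnd_Q: assumes F: "is_form sc ip t" and P: "positive_form t" and U: "fdom t = UNIV"
    and B: "bounded_form ip t"
  shows "\<exists>M\<ge>0. \<forall>x. qf (fval t) x \<le> M * (nrm x)^2"
proof -
  obtain M where M: "\<And>v. v \<in> {Re (fval t x x) | x. x \<in> fdom t \<and> nrm x = 1} \<Longrightarrow> v \<le> M"
    using B unfolding bounded_form_def bdd_above_def by blast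
  have "qf (fval t) x \<le> max M 0 * (nrm x)^2" for x
  proof (cases "x = 0")
    case True
    have "qf (fval t) 0 = 0" using S_02[OF form_sesq[OF F]] U by (simp add: qf_def)
    thus ?thesis using True by simp
  next
    case False
    hence np: "nrm x > 0" using hn_eq0 hn_nonneg[of x] by (metis less_eq_real_def)
    let ?u = "sc (complex_of_real (1 / nrm x)) x"
    have nu: "nrm ?u = 1" using np by (simp add: hn_sc norm_divide)
    have "Re (fval t ?u ?u) \<le> M" using M nu U by blast
    hence qu: "qf (fval t) ?u \<le> max M 0" unfolding qf_def by simp
    have "x = sc (complex_of_real (nrm x)) ?u" using np by (simp add: sc_sc)
    hence "qf (fval t) x = (cmod (complex_of_real (nrm x)))^2 * qf (fval t) ?u"
      using q_sc[OF form_sesq[OF F] form_psd[OF P]] U by (metis UNIV_I)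
    also have "\<dots> = (nrm x)^2 * qf (fval t) ?u" using hn_nonneg[of x] by simp
    also have "\<dots> \<le> (nrm x)^2 * max M 0" using qu by (intro mult_left_mono) auto
    finally show ?thesis by (simp add: mult.commute)
  qed
  thus ?thesis by (intro exI[of _ "max M 0"]) auto
qed

lemma bnd_closed: assumes nz: "\<exists>v::'a. v \<noteq> 0" and F: "is_form sc ip t" and P: "positive_form t"
    and U: "fdom t = UNIV" and B: "bounded_form ip t"
  shows "closed_form sc ip t"
proof (rule closed_from_q[OF nz F P])
  obtain M where M: "M \<ge> 0" "\<And>x. qf (fval t) x \<le> M * (nrm x)^2" using bnd_Q[OF F P U B] by blast
  fix X :: "nat \<Rightarrow> 'a" assume "hcauchy X"
  then obtain L where L: "conv X L" using hcauchy_conv by blast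
  have "(\<lambda>k. qf (fval t) (X k - L)) \<longlonglongrightarrow> 0"
  proof (rule null_sandwich)
    show "(\<lambda>k. M * (nrm (X k - L))^2) \<longlonglongrightarrow> 0"
      using tendsto_mult[OF tendsto_const tendsto_power[OF L[unfolded conv_def], of 2], of M] by simp
    show "0 \<le> qf (fval t) (X k - L)" for k using Q_nonneg[OF F P] U by simp
    show "qf (fval t) (X k - L) \<le> M * (nrm (X k - L))^2" for k by (rule M(2))
  qed
  thus "\<exists>L\<in>fdom t. conv X L \<and> (\<lambda>k. qf (fval t) (X k - L)) \<longlonglongrightarrow> 0" using L U by blast
qed

lemma bnd_mono: assumes B: "bounded_form ip b" and sub: "fdom a \<subseteq> fdom b"
    and le: "\<And>x. x \<in> fdom a \<Longrightarrow> Re (fval a x x) \<le> Re (fval b x x)"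
  shows "bounded_form ip a"
proof -
  obtain M where M: "\<And>v. v \<in> {Re (fval b x x) | x. x \<in> fdom b \<and> nrm x = 1} \<Longrightarrow> v \<le> M"
    using B unfolding bounded_form_def bdd_above_def by blast
  show ?thesis unfolding bounded_form_def bdd_above_def
  proof (intro exI ballI)
    fix v assume "v \<in> {Re (fval a x x) | x. x \<in> fdom a \<and> nrm x = 1}"
    then obtain x where x: "x \<in> fdom a" "nrm x = 1" "v = Re (fval a x x)" by blast
    have "Re (fval b x x) \<le> M" using M x sub by blast
    thus "v \<le> M" using le[OF x(1)] x(3) by linarith
  qed
qed

lemma bnd_add: assumes A: "bounded_form ip a" and B: "bounded_form ip b"
  shows "bounded_form ip (form_add a b)"
proof -
  obtain Ma where Ma: "\<And>v. v \<in> {Re (fval a x x) | x. x \<in> fdom a \<and> nrm x = 1} \<Longrightarrow> v \<le> Ma"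
    using A unfolding bounded_form_def bdd_above_def by blast
  obtain Mb where Mb: "\<And>v. v \<in> {Re (fval b x x) | x. x \<in> fdom b \<and> nrm x = 1} \<Longrightarrow> v \<le> Mb"
    using B unfolding bounded_form_def bdd_above_def by blast
  show ?thesis unfolding bounded_form_def bdd_above_def
  proof (intro exI ballI)
    fix v assume "v \<in> {Re (fval (form_add a b) x x) | x. x \<in> fdom (form_add a b) \<and> nrm x = 1}"
    then obtain x where x: "x \<in> fdom a" "x \<in> fdom b" "nrm x = 1" "v = Re (fval (form_add a b) x x)" by auto
    have "Re (fval a x x) \<le> Ma" "Re (fval b x x) \<le> Mb" using Ma Mb x by blast+
    thus "v \<le> Ma + Mb" using x by (simp add: fa_val)
  qed
qed

lemma form_eq_diag_re:
  assumes aF: "is_form sc ip a" and bF: "is_form sc ip b" and aP: "positive_form a" and bP: "positive_form b"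
    and d: "fdom a = fdom b" and re: "\<And>x. x \<in> fdom a \<Longrightarrow> Re (fval a x x) = Re (fval b x x)"
  shows "a = b"
proof (rule form_eqI[OF aF bF d])
  fix x assume x: "x \<in> fdom a"
  have "Im (fval a x x) = 0" using aP x unfolding positive_form_def by blast
  moreover have "Im (fval b x x) = 0" using bP x d unfolding positive_form_def by blast
  ultimately show "fval a x x = fval b x x" using re[OF x] by (rule re_im_eq)
qed

lemma rp_unique: assumes nz: "\<exists>v::'a. v \<noteq> 0" and F: "is_form sc ip t" and Pt: "positive_form t"
    and rc: "reg_candidate sc ip t r"
    and rm: "\<And>r'. reg_candidate sc ip t r' \<Longrightarrow> \<forall>x\<in>fdom t. Re (fval r' x x) \<le> Re (fval r x x)"
  shows "regular_part sc ip t = r"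
proof -
  have c1: "reg_candidate sc ip t (regular_part sc ip t)" by (rule rp_cand[OF nz F Pt])
  have m1: "\<forall>x\<in>fdom t. Re (fval r x x) \<le> Re (fval (regular_part sc ip t) x x)" by (rule rp_max[OF nz F Pt rc])
  have m2: "\<forall>x\<in>fdom t. Re (fval (regular_part sc ip t) x x) \<le> Re (fval r x x)" by (rule rm[OF c1])
  show ?thesis
  proof (rule form_eq_diag_re)
    show "is_form sc ip (regular_part sc ip t)" "positive_form (regular_part sc ip t)"
      "is_form sc ip r" "positive_form r" using c1 rc unfolding reg_candidate_def by auto
    show "fdom (regular_part sc ip t) = fdom r" using c1 rc unfolding reg_candidate_def by auto
    fix x assume "x \<in> fdom (regular_part sc ip t)"
    hence "x \<in> fdom t" using c1 unfolding reg_candidate_def by auto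
    thus "Re (fval (regular_part sc ip t) x x) = Re (fval r x x)" using m1 m2 by (metis antisym)
  qed
qed

lemma rp_bnd: assumes nz: "\<exists>v::'a. v \<noteq> 0" and V: "t \<in> Vf sc ip" and B: "bounded_form ip t"
  shows "regular_part sc ip t = t"
proof (rule rp_unique[OF nz Vf_form[OF V] Vf_pos[OF V]])
  have C: "closed_form sc ip t" using bnd_closed[OF nz Vf_form[OF V] Vf_pos[OF V] Vf_bnd[OF V B] B] .
  have "closable_form sc ip t" unfolding closable_form_def using C by blast
  thus "reg_candidate sc ip t t" unfolding reg_candidate_def using Vf_form[OF V] Vf_pos[OF V] by auto
  fix r' assume "reg_candidate sc ip t r'"
  thus "\<forall>x\<in>fdom t. Re (fval r' x x) \<le> Re (fval t x x)" unfolding reg_candidate_def by blast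
qed

lemma cand_sum: assumes nz: "\<exists>v::'a. v \<noteq> 0" and x: "x \<in> Vf sc ip" and y: "y \<in> Vf sc ip"
    and d: "dense_in ip (fdom x \<inter> fdom y)"
  shows "reg_candidate sc ip (form_add x y) (form_add (regular_part sc ip x) (regular_part sc ip y))"
proof -
  have cx: "reg_candidate sc ip x (regular_part sc ip x)" by (rule rp_cand[OF nz Vf_form[OF x] Vf_pos[OF x]])
  have cy: "reg_candidate sc ip y (regular_part sc ip y)" by (rule rp_cand[OF nz Vf_form[OF y] Vf_pos[OF y]])
  let ?a = "regular_part sc ip x" and ?b = "regular_part sc ip y"
  have aF: "is_form sc ip ?a" and aP: "positive_form ?a" and ac: "closable_form sc ip ?a"
    and ad: "fdom ?a = fdom x" and ale: "\<forall>z\<in>fdom x. Re (fval ?a z z) \<le> Re (fval x z z)"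
    using cx unfolding reg_candidate_def by auto
  have bF: "is_form sc ip ?b" and bP: "positive_form ?b" and bc: "closable_form sc ip ?b"
    and bd: "fdom ?b = fdom y" and ble: "\<forall>z\<in>fdom y. Re (fval ?b z z) \<le> Re (fval y z z)"
    using cy unfolding reg_candidate_def by auto
  have d': "dense_in ip (fdom ?a \<inter> fdom ?b)" using d ad bd by simp
  show ?thesis unfolding reg_candidate_def
  proof (intro conjI)
    show "is_form sc ip (form_add ?a ?b)" by (rule add_form[OF aF bF d'])
    show "positive_form (form_add ?a ?b)" by (rule add_pos[OF aP bP])
    show "closable_form sc ip (form_add ?a ?b)" by (rule closable_add[OF nz ac bc d'])
    show "fdom (form_add ?a ?b) = fdom (form_add x y)" using ad bd by simp
    show "\<forall>z\<in>fdom (form_add x y). Re (fval (form_add ?a ?b) z z) \<le> Re (fval (form_add x y) z z)"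
      using ale ble ad bd by (auto simp: fa_val intro: add_mono)
  qed
qed

end


context hs begin

context
  assumes nz: "\<exists>v::'a. v \<noteq> 0"
begin

lemma op_Some: "obar_oplus sc ip x y = Some w \<longleftrightarrow>
   oplus_defined ip x y \<and> regular_part sc ip (form_add x y) = form_add (regular_part sc ip x) (regular_part sc ip y)
   \<and> w = form_add x y"
  unfolding obar_oplus_def by auto

lemma od_sym: "oplus_defined ip x y = oplus_defined ip y x" unfolding oplus_defined_def by auto

lemma od_dense: assumes x: "x \<in> Vf sc ip" and y: "y \<in> Vf sc ip" and od: "oplus_defined ip x y"
  shows "dense_in ip (fdom x \<inter> fdom y)"
proof -
  have dx: "dense_in ip (fdom x)" and dy: "dense_in ip (fdom y)"
    using Vf_form[OF x] Vf_form[OF y] unfolding is_form_def by auto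
  show ?thesis using od Vf_bnd[OF x] Vf_bnd[OF y] dx dy unfolding oplus_defined_def by auto
qed

lemma bnd_sum_left: assumes x: "x \<in> Vf sc ip" and y: "y \<in> Vf sc ip" and od: "oplus_defined ip x y"
    and B: "bounded_form ip (form_add x y)"
  shows "bounded_form ip x"
proof (cases "bounded_form ip x")
  case True thus ?thesis .
next
  case False
  hence "fdom x \<subseteq> fdom y" using od Vf_bnd[OF y] unfolding oplus_defined_def by auto
  hence sub: "fdom x \<subseteq> fdom (form_add x y)" by auto
  show ?thesis
  proof (rule bnd_mono[OF B sub])
    fix z assume z: "z \<in> fdom x"
    hence "z \<in> fdom y" using sub by auto
    hence "0 \<le> Re (fval y z z)" using Vf_pos[OF y] unfolding positive_form_def by blast
    thus "Re (fval x z z) \<le> Re (fval (form_add x y) z z)" using z sub by (auto simp: fa_val)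
  qed
qed

lemma bnd_sum_iff: assumes x: "x \<in> Vf sc ip" and y: "y \<in> Vf sc ip" and od: "oplus_defined ip x y"
  shows "bounded_form ip (form_add x y) \<longleftrightarrow> bounded_form ip x \<and> bounded_form ip y"
proof
  assume B: "bounded_form ip (form_add x y)"
  show "bounded_form ip x \<and> bounded_form ip y"
  proof
    show "bounded_form ip x" by (rule bnd_sum_left[OF x y od B])
    have od': "oplus_defined ip y x" using od od_sym by blast
    have "bounded_form ip (form_add y x)" using B fa_comm[of x y] by simp
    thus "bounded_form ip y" by (rule bnd_sum_left[OF y x od'])
  qed
next
  assume "bounded_form ip x \<and> bounded_form ip y"
  thus "bounded_form ip (form_add x y)" using bnd_add by blast
qed

lemma sum_Vf: assumes x: "x \<in> Vf sc ip" and y: "y \<in> Vf sc ip" and od: "oplus_defined ip x y"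
  shows "form_add x y \<in> Vf sc ip"
  unfolding Vf_def
proof (intro CollectI conjI impI)
  show "is_form sc ip (form_add x y)" by (rule add_form[OF Vf_form[OF x] Vf_form[OF y] od_dense[OF x y od]])
  show "positive_form (form_add x y)" by (rule add_pos[OF Vf_pos[OF x] Vf_pos[OF y]])
  assume "bounded_form ip (form_add x y)"
  hence "bounded_form ip x" "bounded_form ip y" using bnd_sum_iff[OF x y od] by auto
  thus "fdom (form_add x y) = UNIV" using Vf_bnd[OF x] Vf_bnd[OF y] by simp
qed

lemma op_closed: "x \<in> Vf sc ip \<Longrightarrow> y \<in> Vf sc ip \<Longrightarrow> obar_oplus sc ip x y = Some w \<Longrightarrow> w \<in> Vf sc ip"
  unfolding op_Some by (auto intro: sum_Vf)

lemma op_comm: "obar_oplus sc ip x y = obar_oplus sc ip y x"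
  unfolding obar_oplus_def using od_sym[of x y] fa_comm[of x y]
    fa_comm[of "regular_part sc ip x" "regular_part sc ip y"] by simp

lemma rp_Vf: "x \<in> Vf sc ip \<Longrightarrow> reg_candidate sc ip x (regular_part sc ip x)"
  using rp_cand[OF nz Vf_form Vf_pos] by blast

lemma op_zero: assumes x: "x \<in> Vf sc ip" shows "obar_oplus sc ip x zero_form = Some x"
proof -
  have od: "oplus_defined ip x zero_form" unfolding oplus_defined_def using zero_bnd by blast
  have fx: "form_add x zero_form = x" by (rule fa_zero[OF Vf_form[OF x]])
  have rz: "regular_part sc ip zero_form = zero_form" by (rule rp_bnd[OF nz zero_Vf zero_bnd])
  have "is_form sc ip (regular_part sc ip x)" using rp_Vf[OF x] unfolding reg_candidate_def by blast
  hence "form_add (regular_part sc ip x) (regular_part sc ip zero_form) = regular_part sc ip x"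
    using rz fa_zero by simp
  thus ?thesis unfolding op_Some using od fx by simp
qed

lemma op_zero_sum: assumes x: "x \<in> Vf sc ip" and y: "y \<in> Vf sc ip"
    and e: "obar_oplus sc ip x y = Some zero_form"
  shows "x = zero_form \<and> y = zero_form"
proof -
  have s: "form_add x y = zero_form" using e unfolding op_Some by simp
  hence dom: "fdom x = UNIV" "fdom y = UNIV" using fa_dom[of x y] by auto
  have v: "fval x z z + fval y z z = 0" for z
    using arg_cong[OF s, of "\<lambda>f. fval f z z"] dom by (simp add: fa_val)
  have px: "0 \<le> Re (fval x z z)" and py: "0 \<le> Re (fval y z z)" for z
    using Vf_pos[OF x] Vf_pos[OF y] dom unfolding positive_form_def by auto
  have rx: "Re (fval x z z) = 0" and ry: "Re (fval y z z) = 0" for z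
    using v[of z] px[of z] py[of z] by (metis add_nonneg_eq_0_iff plus_complex.sel(1) zero_complex.sel(1))+
  have "x = zero_form"
    by (rule form_eq_diag_re[OF Vf_form[OF x] zero_is_form Vf_pos[OF x] zero_pos]) (use dom rx in auto)
  moreover have "y = zero_form"
    by (rule form_eq_diag_re[OF Vf_form[OF y] zero_is_form Vf_pos[OF y] zero_pos]) (use dom ry in auto)
  ultimately show ?thesis by blast
qed


lemma bnd_cont: assumes F: "is_form sc ip t" and P: "positive_form t" and U: "fdom t = UNIV"
    and B: "bounded_form ip t" and c: "conv s z"
  shows "(\<lambda>n. qf (fval t) (s n)) \<longlonglongrightarrow> qf (fval t) z"
proof -
  obtain M where M: "M \<ge> 0" "\<And>x. qf (fval t) x \<le> M * (nrm x)^2" using bnd_Q[OF F P U B] by blast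
  have S: "sesq UNIV (fval t)" using form_sesq[OF F] U by simp
  have Pp: "\<forall>x\<in>UNIV. 0 \<le> Re (fval t x x)" using form_psd[OF P] U by simp
  have "(\<lambda>n. sqrt (qf (fval t) (s n)) - sqrt (qf (fval t) z)) \<longlonglongrightarrow> 0"
  proof (rule tendsto_rabs_zero_cancel, rule null_sandwich)
    show "(\<lambda>n. sqrt M * nrm (s n - z)) \<longlonglongrightarrow> 0"
      using tendsto_mult[OF tendsto_const c[unfolded conv_def], of "sqrt M"] by simp
    fix n
    have "\<bar>sqrt (qf (fval t) (s n)) - sqrt (qf (fval t) z)\<bar> \<le> sqrt (qf (fval t) (s n - z))"
      by (rule q_tri_diff[OF S Pp]) auto
    also have "\<dots> \<le> sqrt (M * (nrm (s n - z))^2)" using M(2) by simp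
    also have "\<dots> = sqrt M * nrm (s n - z)" using hn_nonneg by (simp add: real_sqrt_mult)
    finally show "\<bar>sqrt (qf (fval t) (s n)) - sqrt (qf (fval t) z)\<bar> \<le> sqrt M * nrm (s n - z)" .
  qed auto
  hence "(\<lambda>n. sqrt (qf (fval t) (s n))) \<longlonglongrightarrow> sqrt (qf (fval t) z)" by (simp add: LIM_zero_cancel)
  hence "(\<lambda>n. (sqrt (qf (fval t) (s n)))^2) \<longlonglongrightarrow> (sqrt (qf (fval t) z))^2" by (rule tendsto_power)
  thus ?thesis using Q_nonneg[OF F P] U by simp
qed

lemma dense_bnd_eq: assumes y: "y \<in> Vf sc ip" and u: "u \<in> Vf sc ip"
    and bY: "bounded_form ip y" and bu: "bounded_form ip u" and d: "dense_in ip S"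
    and eq: "\<And>z. z \<in> S \<Longrightarrow> Re (fval y z z) = Re (fval u z z)"
  shows "y = u"
proof (rule form_eq_diag_re[OF Vf_form[OF y] Vf_form[OF u] Vf_pos[OF y] Vf_pos[OF u]])
  have Uy: "fdom y = UNIV" and Uu: "fdom u = UNIV" using Vf_bnd[OF y bY] Vf_bnd[OF u bu] by auto
  show "fdom y = fdom u" using Uy Uu by simp
  fix z
  have "\<forall>n. \<exists>v\<in>S. nrm (z - v) < inverse (real (Suc n))" using d unfolding dense_in_def by simp
  then obtain s where s: "\<And>n. s n \<in> S" "\<And>n. nrm (z - s n) < inverse (real (Suc n))" by metis
  have c: "conv s z" unfolding conv_def
  proof (rule null_sandwich[OF LIMSEQ_inverse_real_of_nat])
    show "0 \<le> nrm (s n - z)" for n by (rule hn_nonneg)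
    show "nrm (s n - z) \<le> inverse (real (Suc n))" for n using s(2)[of n] hn_commute[of z "s n"] by simp
  qed
  have l1: "(\<lambda>n. qf (fval y) (s n)) \<longlonglongrightarrow> qf (fval y) z" by (rule bnd_cont[OF Vf_form[OF y] Vf_pos[OF y] Uy bY c])
  have l2: "(\<lambda>n. qf (fval u) (s n)) \<longlonglongrightarrow> qf (fval u) z" by (rule bnd_cont[OF Vf_form[OF u] Vf_pos[OF u] Uu bu c])
  have "(\<lambda>n. qf (fval y) (s n)) = (\<lambda>n. qf (fval u) (s n))" using eq s(1) unfolding qf_def by simp
  with l1 l2 have "qf (fval y) z = qf (fval u) z" using LIMSEQ_unique by metis
  thus "Re (fval y z z) = Re (fval u z z)" unfolding qf_def .
qed

lemma cancel_form: assumes x: "x \<in> Vf sc ip" and y: "y \<in> Vf sc ip" and u: "u \<in> Vf sc ip"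
    and oy: "oplus_defined ip x y" and ou: "oplus_defined ip x u" and e: "form_add x y = form_add x u"
  shows "y = u"
proof -
  have W: "fdom x \<inter> fdom y = fdom x \<inter> fdom u" using arg_cong[OF e, of fdom] by simp
  have agree: "fval y z z = fval u z z" if z: "z \<in> fdom x" "z \<in> fdom y" for z
  proof -
    have "z \<in> fdom u" using W z by blast
    thus ?thesis using arg_cong[OF e, of "\<lambda>f. fval f z z"] z by (simp add: fa_val)
  qed
  have yF: "is_form sc ip y" and uF: "is_form sc ip u" and yP: "positive_form y" and uP: "positive_form u"
    using Vf_form Vf_pos y u by auto
  show ?thesis
  proof (cases "bounded_form ip x")
    case True
    hence "fdom x = UNIV" using Vf_bnd[OF x] by simp
    hence dyu: "fdom y = fdom u" using W by simp
    show ?thesis by (rule form_eq_diag_re[OF yF uF yP uP dyu]) (use agree \<open>fdom x = UNIV\<close> in auto)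
  next
    case nbx: False
    have cy: "bounded_form ip y \<or> fdom x = fdom y" using oy nbx unfolding oplus_defined_def by auto
    have cu: "bounded_form ip u \<or> fdom x = fdom u" using ou nbx unfolding oplus_defined_def by auto
    show ?thesis
    proof (cases "bounded_form ip y \<and> bounded_form ip u")
      case True
      have dx: "dense_in ip (fdom x)" using Vf_form[OF x] unfolding is_form_def by blast
      show ?thesis
      proof (rule dense_bnd_eq[OF y u _ _ dx])
        show "bounded_form ip y" "bounded_form ip u" using True by auto
        fix z assume "z \<in> fdom x"
        moreover have "fdom y = UNIV" using Vf_bnd[OF y] True by simp
        ultimately show "Re (fval y z z) = Re (fval u z z)" using agree by simp
      qed
    next
      case False
      have "fdom y = fdom u \<and> fdom y \<subseteq> fdom x"
      proof (cases "fdom x = fdom y")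
        case xy: True
        show ?thesis
        proof (cases "fdom x = fdom u")
          case True thus ?thesis using xy by simp
        next
          case xu: False
          hence bu: "bounded_form ip u" using cu by simp
          hence Uu: "fdom u = UNIV" using Vf_bnd[OF u] by simp
          have "bounded_form ip y"
          proof (rule bnd_mono[OF bu])
            show "fdom y \<subseteq> fdom u" using Uu by simp
            fix z assume "z \<in> fdom y"
            thus "Re (fval y z z) \<le> Re (fval u z z)" using agree xy by simp
          qed
          thus ?thesis using bu False by simp
        qed
      next
        case xy: False
        hence bY: "bounded_form ip y" using cy by simp
        hence Uy: "fdom y = UNIV" using Vf_bnd[OF y] by simp
        have nbu: "\<not> bounded_form ip u" using False bY by simp
        hence xu: "fdom x = fdom u" using cu by simp
        have "bounded_form ip u"
        proof (rule bnd_mono[OF bY])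
          show "fdom u \<subseteq> fdom y" using Uy by simp
          fix z assume "z \<in> fdom u"
          thus "Re (fval u z z) \<le> Re (fval y z z)" using agree xu Uy by simp
        qed
        thus ?thesis using nbu by simp
      qed
      hence dyu: "fdom y = fdom u" and sub: "fdom y \<subseteq> fdom x" by auto
      show ?thesis by (rule form_eq_diag_re[OF yF uF yP uP dyu]) (use agree sub in auto)
    qed
  qed
qed

lemma op_cancel: assumes x: "x \<in> Vf sc ip" and y: "y \<in> Vf sc ip" and u: "u \<in> Vf sc ip"
    and nn: "obar_oplus sc ip x y \<noteq> None" and e: "obar_oplus sc ip x y = obar_oplus sc ip x u"
  shows "y = u"
proof -
  obtain w where w: "obar_oplus sc ip x y = Some w" using nn by blast
  have 1: "oplus_defined ip x y" "w = form_add x y" using w unfolding op_Some by auto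
  have w2: "obar_oplus sc ip x u = Some w" using w e by simp
  have 2: "oplus_defined ip x u" "w = form_add x u" using w2 unfolding op_Some by auto
  show ?thesis using cancel_form[OF x y u 1(1) 2(1)] 1(2) 2(2) by simp
qed


lemma rp_props: assumes "t \<in> Vf sc ip"
  shows "is_form sc ip (regular_part sc ip t)" "positive_form (regular_part sc ip t)"
    "fdom (regular_part sc ip t) = fdom t"
  using rp_Vf[OF assms] unfolding reg_candidate_def by auto

lemma od_facts: assumes x: "x \<in> Vf sc ip" and y: "y \<in> Vf sc ip" and u: "u \<in> Vf sc ip"
    and oxy: "oplus_defined ip x y" and o2: "oplus_defined ip (form_add x y) u"
    and nb: "\<not> (bounded_form ip y \<and> bounded_form ip u)"
  shows "fdom y \<inter> fdom u \<subseteq> fdom x" "oplus_defined ip y u" "oplus_defined ip x (form_add y u)"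
proof -
  have bxy: "bounded_form ip (form_add x y) \<longleftrightarrow> bounded_form ip x \<and> bounded_form ip y"
    by (rule bnd_sum_iff[OF x y oxy])
  have ux: "bounded_form ip x \<Longrightarrow> fdom x = UNIV" using Vf_bnd[OF x] .
  have uy: "bounded_form ip y \<Longrightarrow> fdom y = UNIV" using Vf_bnd[OF y] .
  have uu: "bounded_form ip u \<Longrightarrow> fdom u = UNIV" using Vf_bnd[OF u] .
  have c1: "bounded_form ip x \<or> bounded_form ip y \<or> fdom x = fdom y" using oxy unfolding oplus_defined_def .
  have c2: "(bounded_form ip x \<and> bounded_form ip y) \<or> bounded_form ip u \<or> fdom x \<inter> fdom y = fdom u"
    using o2 bxy unfolding oplus_defined_def by simp
  have "fdom y \<inter> fdom u \<subseteq> fdom x \<and> oplus_defined ip y u \<and> oplus_defined ip x (form_add y u)"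
  proof (cases "bounded_form ip y")
    case False
    have i: "fdom y \<subseteq> fdom x" using c1 False ux by auto
    show ?thesis
    proof (cases "bounded_form ip u")
      case True
      thus ?thesis using i c1 False ux uu unfolding oplus_defined_def by auto
    next
      case nbu: False
      hence e: "fdom x \<inter> fdom y = fdom u" using c2 False by auto
      hence yu: "fdom y = fdom u" using i by auto
      have "oplus_defined ip y u" unfolding oplus_defined_def using yu by simp
      moreover have "oplus_defined ip x (form_add y u)"
      proof (cases "bounded_form ip x")
        case True thus ?thesis unfolding oplus_defined_def by simp
      next
        case False
        hence "fdom x = fdom y" using c1 \<open>\<not> bounded_form ip y\<close> by simp
        thus ?thesis unfolding oplus_defined_def using yu by simp
      qed
      ultimately show ?thesis using i by auto
    qed
  next
    case bY: True
    hence nbu: "\<not> bounded_form ip u" using nb by simp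
    have Uy: "fdom y = UNIV" using uy bY by simp
    have c3: "bounded_form ip x \<or> fdom x = fdom u" using c2 nbu Uy by auto
    show ?thesis
    proof (cases "bounded_form ip x")
      case True thus ?thesis using ux Uy bY unfolding oplus_defined_def by auto
    next
      case False
      hence "fdom x = fdom u" using c3 by simp
      thus ?thesis using Uy bY unfolding oplus_defined_def by auto
    qed
  qed
  thus "fdom y \<inter> fdom u \<subseteq> fdom x" "oplus_defined ip y u" "oplus_defined ip x (form_add y u)" by auto
qed

lemma op_assoc1: assumes x: "x \<in> Vf sc ip" and y: "y \<in> Vf sc ip" and u: "u \<in> Vf sc ip"
    and e1: "obar_oplus sc ip x y = Some xy" and e2: "obar_oplus sc ip xy u \<noteq> None"
  shows "\<exists>yu. obar_oplus sc ip y u = Some yu \<and> obar_oplus sc ip x yu = obar_oplus sc ip xy u"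
proof -
  let ?R = "regular_part sc ip"
  have oxy: "oplus_defined ip x y" and rxy: "?R (form_add x y) = form_add (?R x) (?R y)"
    and xy: "xy = form_add x y" using e1 unfolding op_Some by auto
  obtain w where w: "obar_oplus sc ip xy u = Some w" using e2 by blast
  have o2: "oplus_defined ip (form_add x y) u" and r2: "?R (form_add (form_add x y) u) = form_add (?R (form_add x y)) (?R u)"
    and ww: "w = form_add (form_add x y) u" using w unfolding op_Some xy by auto
  have xyV: "form_add x y \<in> Vf sc ip" by (rule sum_Vf[OF x y oxy])
  have key: "oplus_defined ip y u \<and> oplus_defined ip x (form_add y u) \<and> ?R (form_add y u) = form_add (?R y) (?R u)"
  proof (cases "bounded_form ip y \<and> bounded_form ip u")
    case True
    have oyu: "oplus_defined ip y u" using True unfolding oplus_defined_def by simp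
    have yuV: "form_add y u \<in> Vf sc ip" by (rule sum_Vf[OF y u oyu])
    have byu: "bounded_form ip (form_add y u)" using bnd_add True by blast
    have "?R (form_add y u) = form_add y u" by (rule rp_bnd[OF nz yuV byu])
    moreover have "?R y = y" "?R u = u" using rp_bnd[OF nz] y u True by auto
    ultimately show ?thesis using oyu byu unfolding oplus_defined_def by simp
  next
    case False
    have incl: "fdom y \<inter> fdom u \<subseteq> fdom x" and oyu: "oplus_defined ip y u"
      and oxyu: "oplus_defined ip x (form_add y u)" using od_facts[OF x y u oxy o2 False] by auto
    have yuV: "form_add y u \<in> Vf sc ip" by (rule sum_Vf[OF y u oyu])
    have tV: "form_add x (form_add y u) \<in> Vf sc ip" by (rule sum_Vf[OF x yuV oxyu])
    have c1: "reg_candidate sc ip (form_add y u) (form_add (?R y) (?R u))"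
      by (rule cand_sum[OF nz y u od_dense[OF y u oyu]])
    have le1: "\<forall>z\<in>fdom (form_add y u). Re (fval (form_add (?R y) (?R u)) z z) \<le> Re (fval (?R (form_add y u)) z z)"
      by (rule rp_max[OF nz Vf_form[OF yuV] Vf_pos[OF yuV] c1])
    have c2: "reg_candidate sc ip (form_add x (form_add y u)) (form_add (?R x) (?R (form_add y u)))"
      by (rule cand_sum[OF nz x yuV od_dense[OF x yuV oxyu]])
    have le2: "\<forall>z\<in>fdom (form_add x (form_add y u)). Re (fval (form_add (?R x) (?R (form_add y u))) z z)
        \<le> Re (fval (?R (form_add x (form_add y u))) z z)"
      by (rule rp_max[OF nz Vf_form[OF tV] Vf_pos[OF tV] c2])
    have rt: "?R (form_add x (form_add y u)) = form_add (form_add (?R x) (?R y)) (?R u)"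
      using r2 rxy fa_assoc by metis
    have dRx: "fdom (?R x) = fdom x" and dRy: "fdom (?R y) = fdom y" and dRu: "fdom (?R u) = fdom u"
      and dRyu: "fdom (?R (form_add y u)) = fdom y \<inter> fdom u"
      using rp_props(3) x y u yuV by auto
    show ?thesis
    proof (intro conjI oyu oxyu)
      show "?R (form_add y u) = form_add (?R y) (?R u)"
      proof (rule form_eq_diag_re)
        show "is_form sc ip (?R (form_add y u))" "positive_form (?R (form_add y u))"
          using rp_props yuV by auto
        show "is_form sc ip (form_add (?R y) (?R u))" "positive_form (form_add (?R y) (?R u))"
          using c1 unfolding reg_candidate_def by auto
        show "fdom (?R (form_add y u)) = fdom (form_add (?R y) (?R u))" using dRyu dRy dRu by simp
        fix z assume "z \<in> fdom (?R (form_add y u))"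
        hence z: "z \<in> fdom y" "z \<in> fdom u" "z \<in> fdom x" using dRyu incl by auto
        have a: "Re (fval (?R y) z z) + Re (fval (?R u) z z) \<le> Re (fval (?R (form_add y u)) z z)"
          using le1 z dRy dRu by (auto simp: fa_val)
        have b: "Re (fval (?R x) z z) + Re (fval (?R (form_add y u)) z z)
            \<le> Re (fval (?R x) z z) + Re (fval (?R y) z z) + Re (fval (?R u) z z)"
          using le2 z dRx dRy dRu dRyu unfolding rt by (auto simp: fa_val)
        show "Re (fval (?R (form_add y u)) z z) = Re (fval (form_add (?R y) (?R u)) z z)"
          using a b z dRy dRu by (auto simp: fa_val)
      qed
    qed
  qed
  have oyu: "oplus_defined ip y u" and oxyu: "oplus_defined ip x (form_add y u)"
    and ryu: "?R (form_add y u) = form_add (?R y) (?R u)" using key by auto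
  have s1: "obar_oplus sc ip y u = Some (form_add y u)" unfolding op_Some using oyu ryu by simp
  have "?R (form_add x (form_add y u)) = form_add (?R x) (?R (form_add y u))"
    using r2 rxy ryu fa_assoc by metis
  hence s2: "obar_oplus sc ip x (form_add y u) = Some (form_add x (form_add y u))"
    unfolding op_Some using oxyu by simp
  have "form_add x (form_add y u) = w" using ww fa_assoc by metis
  hence "obar_oplus sc ip x (form_add y u) = obar_oplus sc ip xy u" using s2 w by simp
  thus ?thesis using s1 by blast
qed

lemma op_assoc2: assumes x: "x \<in> Vf sc ip" and y: "y \<in> Vf sc ip" and u: "u \<in> Vf sc ip"
    and e1: "obar_oplus sc ip y u = Some yu" and e2: "obar_oplus sc ip x yu \<noteq> None"
  shows "\<exists>xy. obar_oplus sc ip x y = Some xy \<and> obar_oplus sc ip xy u = obar_oplus sc ip x yu"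
proof -
  have e1': "obar_oplus sc ip u y = Some yu" using e1 op_comm by metis
  have e2': "obar_oplus sc ip yu x \<noteq> None" using e2 op_comm by metis
  obtain yx where yx: "obar_oplus sc ip y x = Some yx" "obar_oplus sc ip u yx = obar_oplus sc ip yu x"
    using op_assoc1[OF u y x e1' e2'] by blast
  show ?thesis
    using yx op_comm by metis
qed

end
end


theorem theorem4p19:
  fixes sc :: "complex \<Rightarrow> 'a::ab_group_add \<Rightarrow> 'a"
    and ip :: "'a \<Rightarrow> 'a \<Rightarrow> complex"
  assumes "complex_hilbert_space sc ip"
    and "infinite_dimensional sc"
  shows "gen_effect_algebra (Vf sc ip) (obar_oplus sc ip) zero_form"
proof -
  interpret hs sc ip by (rule hs.intro) (rule assms(1))
  have nz: "\<exists>v::'a. v \<noteq> 0"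
  proof -
    have "cspan sc {} \<noteq> UNIV" using assms(2) unfolding infinite_dimensional_def by blast
    moreover have "cspan sc {} = {0}" unfolding cspan_def by simp
    ultimately show ?thesis by auto
  qed
  show ?thesis
    unfolding gen_effect_algebra_def
  proof (intro conjI ballI allI impI)
    show "zero_form \<in> Vf sc ip" by (rule zero_Vf)
    show "\<And>x y w. x \<in> Vf sc ip \<Longrightarrow> y \<in> Vf sc ip \<Longrightarrow> obar_oplus sc ip x y = Some w \<Longrightarrow> w \<in> Vf sc ip"
      by (rule op_closed[OF nz])
    show "\<And>x y. obar_oplus sc ip x y = obar_oplus sc ip y x" by (rule op_comm[OF nz])
    show "\<exists>yu. obar_oplus sc ip y u = Some yu \<and> obar_oplus sc ip x yu = obar_oplus sc ip xy u"
      if "x \<in> Vf sc ip" "y \<in> Vf sc ip" "u \<in> Vf sc ip"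
        "obar_oplus sc ip x y = Some xy \<and> obar_oplus sc ip xy u \<noteq> None" for x y u xy
      using op_assoc1[OF nz that(1-3)] that(4) by blast
    show "\<exists>xy. obar_oplus sc ip x y = Some xy \<and> obar_oplus sc ip xy u = obar_oplus sc ip x yu"
      if "x \<in> Vf sc ip" "y \<in> Vf sc ip" "u \<in> Vf sc ip"
        "obar_oplus sc ip y u = Some yu \<and> obar_oplus sc ip x yu \<noteq> None" for x y u yu
      using op_assoc2[OF nz that(1-3)] that(4) by blast
    show "obar_oplus sc ip x zero_form = Some x" if "x \<in> Vf sc ip" for x by (rule op_zero[OF nz that])
    show "y = u" if "x \<in> Vf sc ip" "y \<in> Vf sc ip" "u \<in> Vf sc ip"
        "obar_oplus sc ip x y \<noteq> None \<and> obar_oplus sc ip x y = obar_oplus sc ip x u" for x y u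
      using op_cancel[OF nz that(1-3)] that(4) by blast
    show "x = zero_form" if "x \<in> Vf sc ip" "y \<in> Vf sc ip" "obar_oplus sc ip x y = Some zero_form" for x y
      using op_zero_sum[OF nz that] by blast
    show "y = zero_form" if "x \<in> Vf sc ip" "y \<in> Vf sc ip" "obar_oplus sc ip x y = Some zero_form" for x y
      using op_zero_sum[OF nz that] by blast
  qed
qed


end
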